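(* Let $R$ be a unital associative ring and $$A=\begin{pmatrix}1&1&1\\1&a&b\\1&c&d\end{pmatrix}\in\widehat{\cal S}.$$ Then $\Phi^2(A)=\omega^{-1}\Phi^{-1}(A)\omega$, where $$\omega=\bigl[d(d-b)^{-1}-c(c-a)^{-1}\bigr]^{-1}\bigl[d(d-b)^{-1}(b-1)-c(c-a)^{-1}(a-1)\bigr]\bigl[(d-c)^{-1}(c-1)-(b-a)^{-1}(a-1)\bigr].$$
   Context: $R^*$: units of $R$. $M_3^*(R)$: invertible $3\times3$ matrices; $M_3^\star(R)$: matrices with all entries in $R^*$. $J_1(M)=M^{-1}$ on $M_3^*(R)$; $J_2(M)_{jk}=(M_{kj})^{-1}$ on $M_3^\star(R)$; $J=J_2\circ J_1$, $J^{-1}=J_1\circ J_2$, where $g\circ f$ has domain $\{x\in{\rm dom}(f):f(x)\in{\rm dom}(g)\}$. $\widehat M_3(R)$: matrices whose first row and column consist of $1$'s. For $A=\{a_{j,k}\}\in M_3^\star(R)$: $\Lambda^L(A)_{j,k}=a_{1,1}a_{j,1}^{-1}a_{j,k}a_{1,k}^{-1}$, $\Lambda^R(A)_{j,k}=a_{j,1}^{-1}a_{j,k}a_{1,k}^{-1}a_{1,1}$. $\Phi(A)=J_2(\Lambda^L(A^{-1}))$ with ${\rm dom}(\Phi)={\rm dom}(J)\cap\widehat M_3(R)\cap M_3^\star(R)$; $\Phi^{-1}(A)=\Lambda^R(J^{-1}(A))$. ${\cal S}=\{M\in M_3(R):$ all square submatrices of $M$ are invertible and $J_2(M)$ is invertible$\}$,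 $\widehat{\cal S}={\cal S}\cap\widehat M_3(R)$. $\omega^{-1}B\omega$ denotes the matrix with entries $\omega^{-1}B_{jk}\omega$. *)

theory Defs
  imports "HOL-Analysis.Analysis"
begin

text \<open>3x3 matrices over a unital associative (not necessarily commutative) ring
  'a :: ring_1 are represented as 'a^3^3; M $ j $ k is the (j,k) entry, indices 1,2,3.\<close>

definition is_unit :: "'a::ring_1 \<Rightarrow> bool" where
  "is_unit x \<longleftrightarrow> (\<exists>y. x * y = 1 \<and> y * x = 1)"

definition rinv :: "'a::ring_1 \<Rightarrow> 'a" where
  "rinv x = (THE y. x * y = 1 \<and> y * x = 1)"

definition minvertible :: "'a::ring_1^3^3 \<Rightarrow> bool" where
  "minvertible M \<longleftrightarrow> (\<exists>N. M ** N = mat 1 \<and> N ** M = mat 1)"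

definition minv :: "'a::ring_1^3^3 \<Rightarrow> 'a^3^3" where
  "minv M = (THE N. M ** N = mat 1 \<and> N ** M = mat 1)"

definition all_units :: "'a::ring_1^3^3 \<Rightarrow> bool" where
  "all_units M \<longleftrightarrow> (\<forall>j k. is_unit (M $ j $ k))"

definition J1 :: "'a::ring_1^3^3 \<Rightarrow> 'a^3^3" where
  "J1 M = minv M"

definition J2 :: "'a::ring_1^3^3 \<Rightarrow> 'a^3^3" where
  "J2 M = (\<chi> j k. rinv (M $ k $ j))"

text \<open>domain of J = J2 o J1, and of J^{-1} = J1 o J2\<close>
definition dom_J :: "'a::ring_1^3^3 \<Rightarrow> bool" where
  "dom_J M \<longleftrightarrow> minvertible M \<and> all_units (J1 M)"

definition dom_Jinv :: "'a::ring_1^3^3 \<Rightarrow> bool" where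
  "dom_Jinv M \<longleftrightarrow> all_units M \<and> minvertible (J2 M)"

definition Jinv :: "'a::ring_1^3^3 \<Rightarrow> 'a^3^3" where
  "Jinv M = J1 (J2 M)"

definition hat :: "'a::ring_1^3^3 \<Rightarrow> bool" where
  "hat M \<longleftrightarrow> (\<forall>k. M $ 1 $ k = 1 \<and> M $ k $ 1 = 1)"

definition LambdaL :: "'a::ring_1^3^3 \<Rightarrow> 'a^3^3" where
  "LambdaL A = (\<chi> j k. A$1$1 * rinv (A$j$1) * A$j$k * rinv (A$1$k))"

definition LambdaR :: "'a::ring_1^3^3 \<Rightarrow> 'a^3^3" where
  "LambdaR A = (\<chi> j k. rinv (A$j$1) * A$j$k * rinv (A$1$k) * A$1$1)"

definition Phi :: "'a::ring_1^3^3 \<Rightarrow> 'a^3^3" where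
  "Phi A = J2 (LambdaL (minv A))"

definition dom_Phi :: "'a::ring_1^3^3 \<Rightarrow> bool" where
  "dom_Phi A \<longleftrightarrow> dom_J A \<and> hat A \<and> all_units A"

definition Phi_inv :: "'a::ring_1^3^3 \<Rightarrow> 'a^3^3" where
  "Phi_inv A = LambdaR (Jinv A)"

text \<open>The square submatrix of M with row set I and column set K (|I| = |K| > 0)
  is invertible: there is N (indexed by K x I) with (M|IxK) N = 1_I and N (M|IxK) = 1_K.\<close>
definition sub_invertible :: "'a::ring_1^3^3 \<Rightarrow> 3 set \<Rightarrow> 3 set \<Rightarrow> bool" where
  "sub_invertible M I K \<longleftrightarrow>
     (\<exists>N::'a^3^3.
        (\<forall>i\<in>I. \<forall>i'\<in>I. (\<Sum>k\<in>K. M$i$k * N$k$i') = (if i = i' then 1 else 0)) \<and>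
        (\<forall>k\<in>K. \<forall>k'\<in>K. (\<Sum>i\<in>I. N$k$i * M$i$k') = (if k = k' then 1 else 0)))"

definition in_S :: "'a::ring_1^3^3 \<Rightarrow> bool" where
  "in_S M \<longleftrightarrow>
     (\<forall>I K. I \<noteq> {} \<and> card I = card K \<longrightarrow> sub_invertible M I K) \<and> minvertible (J2 M)"

definition in_hatS :: "'a::ring_1^3^3 \<Rightarrow> bool" where
  "in_hatS M \<longleftrightarrow> in_S M \<and> hat M"

definition conj_mat :: "'a::ring_1 \<Rightarrow> 'a^3^3 \<Rightarrow> 'a^3^3" where
  "conj_mat w B = (\<chi> j k. rinv w * B$j$k * w)"

definition mat3 :: "'a \<Rightarrow> 'a \<Rightarrow> 'a \<Rightarrow> 'a \<Rightarrow> 'a \<Rightarrow> 'a \<Rightarrow> 'a \<Rightarrow> 'a \<Rightarrow> 'a \<Rightarrow> 'a^3^3" where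
  "mat3 a11 a12 a13 a21 a22 a23 a31 a32 a33 =
     (\<chi> j k. if j = 1 then (if k = 1 then a11 else if k = 2 then a12 else a13)
             else if j = 2 then (if k = 1 then a21 else if k = 2 then a22 else a23)
             else (if k = 1 then a31 else if k = 2 then a32 else a33))"

end

theory Submission
  imports Defs
begin

lemma mat3_nth: "mat3 a11 a12 a13 a21 a22 a23 a31 a32 a33 $ 1 $ 1 = a11"
 "mat3 a11 a12 a13 a21 a22 a23 a31 a32 a33 $ 1 $ 2 = a12"
 "mat3 a11 a12 a13 a21 a22 a23 a31 a32 a33 $ 1 $ 3 = a13"
 "mat3 a11 a12 a13 a21 a22 a23 a31 a32 a33 $ 2 $ 1 = a21"
 "mat3 a11 a12 a13 a21 a22 a23 a31 a32 a33 $ 2 $ 2 = a22"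
 "mat3 a11 a12 a13 a21 a22 a23 a31 a32 a33 $ 2 $ 3 = a23"
 "mat3 a11 a12 a13 a21 a22 a23 a31 a32 a33 $ 3 $ 1 = a31"
 "mat3 a11 a12 a13 a21 a22 a23 a31 a32 a33 $ 3 $ 2 = a32"
 "mat3 a11 a12 a13 a21 a22 a23 a31 a32 a33 $ 3 $ 3 = a33"
  by (simp_all add: mat3_def)

lemma mat3_eq: "(M::'a^3^3) = mat3 (M$1$1) (M$1$2) (M$1$3) (M$2$1) (M$2$2) (M$2$3) (M$3$1) (M$3$2) (M$3$3)"
  unfolding vec_eq_iff forall_3 by (simp add: mat3_nth)

lemma mat3_mult: "mat3 a11 a12 a13 a21 a22 a23 a31 a32 a33 ** mat3 b11 b12 b13 b21 b22 b23 b31 b32 b33 =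
  mat3 (a11*b11+a12*b21+a13*b31) (a11*b12+a12*b22+a13*b32) (a11*b13+a12*b23+a13*b33)
       (a21*b11+a22*b21+a23*b31) (a21*b12+a22*b22+a23*b32) (a21*b13+a22*b23+a23*b33)
       (a31*b11+a32*b21+a33*b31) (a31*b12+a32*b22+a33*b32) (a31*b13+a32*b23+a33*b33)"
  unfolding vec_eq_iff forall_3 by (simp add: mat3_nth matrix_matrix_mult_def sum_3)

lemma mat1_3: "(mat 1 :: 'a::ring_1^3^3) = mat3 1 0 0 0 1 0 0 0 1"
  unfolding vec_eq_iff forall_3 by (simp add: mat3_nth mat_def)

lemma mat3_eq_iff: "mat3 a11 a12 a13 a21 a22 a23 a31 a32 a33 = mat3 b11 b12 b13 b21 b22 b23 b31 b32 b33
  \<longleftrightarrow> a11=b11 \<and> a12=b12 \<and> a13=b13 \<and> a21=b21 \<and> a22=b22 \<and> a23=b23 \<and> a31=b31 \<and> a32=b32 \<and> a33=b33"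
  by (metis mat3_nth)


lemma J2_mat3: "J2 (mat3 x11 x12 x13 x21 x22 x23 x31 x32 x33) =
   mat3 (rinv x11) (rinv x21) (rinv x31) (rinv x12) (rinv x22) (rinv x32) (rinv x13) (rinv x23) (rinv x33)"
  unfolding J2_def by (subst mat3_eq) (simp add: mat3_nth)

lemma assoc_rule: "(a::'a::ring_1)*b = c \<Longrightarrow> a*(b*z) = c*z"
  by (simp add: mult.assoc[symmetric])

lemma sv_gen:
  fixes a ai xa :: "'a::ring_1"
  assumes a1: "a*ai = 1" and a2: "ai*a = 1" and xa1: "(a-1)*xa = 1" and xa2: "xa*(a-1) = 1"
  shows "a*ai = 1" "ai*a = 1" "a*(ai*z) = z" "ai*(a*z) = z"
  "a*xa = 1 + xa" "xa*a = 1 + xa" "a*(xa*z) = z + xa*z" "xa*(a*z) = z + xa*z"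
  "xa*ai = xa - ai" "ai*xa = xa - ai" "xa*(ai*z) = xa*z - ai*z" "ai*(xa*z) = xa*z - ai*z"
proof -
  show A: "a*ai = 1" "ai*a = 1" by (fact a1, fact a2)
  show "a*(ai*z) = z" "ai*(a*z) = z" using assoc_rule[OF a1] assoc_rule[OF a2] by simp_all
  show B: "a*xa = 1 + xa" "xa*a = 1 + xa" using xa1 xa2 by (simp_all add: algebra_simps)
  show "a*(xa*z) = z + xa*z" "xa*(a*z) = z + xa*z" using assoc_rule[OF B(1)] assoc_rule[OF B(2)] by (simp_all add: algebra_simps)
  have "xa - ai = xa*(a*ai) - (xa*(a-1))*ai" by (simp add: a1 xa2)
  also have "\<dots> = xa*ai" by (simp add: algebra_simps)
  finally show C: "xa*ai = xa - ai" by simp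
  have "xa - ai = (ai*a)*xa - ai*((a-1)*xa)" by (simp add: a2 xa1)
  also have "\<dots> = ai*xa" by (simp add: algebra_simps)
  finally show C2: "ai*xa = xa - ai" by simp
  show "xa*(ai*z) = xa*z - ai*z" "ai*(xa*z) = xa*z - ai*z" using assoc_rule[OF C] assoc_rule[OF C2] by (simp_all add: algebra_simps)
qed

lemma unitI: "x*y = 1 \<Longrightarrow> y*x = 1 \<Longrightarrow> is_unit (x::'a::ring_1)"
  unfolding is_unit_def by blast

lemma unit_mult: "is_unit x \<Longrightarrow> is_unit y \<Longrightarrow> is_unit (x*y::'a::ring_1)"
  unfolding is_unit_def
proof (elim exE conjE)
  fix x' y' assume "x*x' = 1" "x'*x = 1" "y*y' = 1" "y'*y = 1"
  hence "(x*y)*(y'*x') = 1" "(y'*x')*(x*y) = 1"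
    by (simp_all add: mult.assoc[symmetric]) (simp_all add: mult.assoc)
  thus "\<exists>z. x*y*z = 1 \<and> z*(x*y) = 1" by blast
qed

lemma unit_uminus: "is_unit x \<Longrightarrow> is_unit (-x::'a::ring_1)"
  unfolding is_unit_def by (metis minus_mult_minus)

lemma unit_one: "is_unit (1::'a::ring_1)"
  unfolding is_unit_def by auto

lemma rinv_eq: "x*y = 1 \<Longrightarrow> y*x = 1 \<Longrightarrow> rinv (x::'a::ring_1) = y"
  unfolding rinv_def
proof (rule the_equality)
  fix z assume "x*y = 1" "y*x = 1" and z: "x*z = 1 \<and> z*x = 1"
  have "z = (y*x)*z" using \<open>y*x = 1\<close> by simp
  also have "\<dots> = y*(x*z)" by (simp add: mult.assoc)
  also have "\<dots> = y" using z by simp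
  finally show "z = y" .
qed auto

lemma unit_rinv: "is_unit x \<Longrightarrow> x * rinv x = 1 \<and> rinv x * (x::'a::ring_1) = 1"
  unfolding is_unit_def using rinv_eq by metis

locale alg =
  fixes a b c d ai bi ci di xa xb xc xd uba uca udb udc ysg t tp :: "'a::ring_1"
  assumes a1: "a*ai = 1" and a2: "ai*a = 1"
    and b1: "b*bi = 1" and b2: "bi*b = 1"
    and c1: "c*ci = 1" and c2: "ci*c = 1"
    and d1: "d*di = 1" and d2: "di*d = 1"
    and xa1: "(a-1)*xa = 1" and xa2: "xa*(a-1) = 1"
    and xb1: "(b-1)*xb = 1" and xb2: "xb*(b-1) = 1"
    and xc1: "(c-1)*xc = 1" and xc2: "xc*(c-1) = 1"
    and xd1: "(d-1)*xd = 1" and xd2: "xd*(d-1) = 1"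
    and uba1: "(b-a)*uba = 1" and uba2: "uba*(b-a) = 1"
    and uca1: "(c-a)*uca = 1" and uca2: "uca*(c-a) = 1"
    and udb1: "(d-b)*udb = 1" and udb2: "udb*(d-b) = 1"
    and udc1: "(d-c)*udc = 1" and udc2: "udc*(d-c) = 1"
    and sg1: "(d - c*ai*b)*ysg = 1" and sg2: "ysg*(d - c*ai*b) = 1"
    and t1: "((d-1) - (c-1)*xa*(b-1))*t = 1" and t2: "t*((d-1) - (c-1)*xa*(b-1)) = 1"
    and tp1: "((di-1) + (bi-1)*xa*a*(ci-1))*tp = 1" and tp2: "tp*((di-1) + (bi-1)*xa*a*(ci-1)) = 1"
begin

lemmas sva = sv_gen[OF a1 a2 xa1 xa2]
lemmas svb = sv_gen[OF b1 b2 xb1 xb2]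
lemmas svc = sv_gen[OF c1 c2 xc1 xc2]
lemmas svd = sv_gen[OF d1 d2 xd1 xd2]
lemmas sv = sva svb svc svd

lemma tr: "d*t = 1 + t + c*(xa*(b*t)) - c*(xa*t) - xa*(b*t) + xa*t"
  "t*d = 1 + t + t*(c*(xa*b)) - t*(c*xa) - t*(xa*b) + t*xa"
  "d*(t*z) = z + t*z + c*(xa*(b*(t*z))) - c*(xa*(t*z)) - xa*(b*(t*z)) + xa*(t*z)"
  "t*(d*z) = z + t*z + t*(c*(xa*(b*z))) - t*(c*(xa*z)) - t*(xa*(b*z)) + t*(xa*z)"
proof -
  show A: "d*t = 1 + t + c*(xa*(b*t)) - c*(xa*t) - xa*(b*t) + xa*t" using t1 by (simp add: algebra_simps)
  show B: "t*d = 1 + t + t*(c*(xa*b)) - t*(c*xa) - t*(xa*b) + t*xa" using t2 by (simp add: algebra_simps)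
  show "d*(t*z) = z + t*z + c*(xa*(b*(t*z))) - c*(xa*(t*z)) - xa*(b*(t*z)) + xa*(t*z)"
    using assoc_rule[OF A, of z] by (simp add: algebra_simps)
  show "t*(d*z) = z + t*z + t*(c*(xa*(b*z))) - t*(c*(xa*z)) - t*(xa*(b*z)) + t*(xa*z)"
    using assoc_rule[OF B, of z] by (simp add: algebra_simps)
qed

definition "S11 = xa + xa*(b-1)*t*(c-1)*xa"
definition "S12 = - (xa*(b-1)*t)"
definition "S21 = - (t*(c-1)*xa)"
definition "B11 = 1 + S11 + S12 + S21 + t"
definition "B12 = - (S11 + S21)"
definition "B13 = - (S12 + t)"
definition "B21 = - (S11 + S12)"
definition "B31 = - (S21 + t)"

lemma Brel:
  "B11 + B21 + B31 = 1" "B12 + S11 + S21 = 0" "B13 + S12 + t = 0"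
  "B11 + a*B21 + b*B31 = 0" "B12 + a*S11 + b*S21 = 1" "B13 + a*S12 + b*t = 0"
  "B11 + c*B21 + d*B31 = 0" "B12 + c*S11 + d*S21 = 0" "B13 + c*S12 + d*t = 1"
  "B11 + B12 + B13 = 1" "B21 + S11 + S12 = 0" "B31 + S21 + t = 0"
  "B11 + B12*a + B13*c = 0" "B21 + S11*a + S12*c = 1" "B31 + S21*a + t*c = 0"
  "B11 + B12*b + B13*d = 0" "B21 + S11*b + S12*d = 0" "B31 + S21*b + t*d = 1"
  unfolding B11_def B12_def B13_def B21_def B31_def S11_def S12_def S21_def
  by (simp_all add: algebra_simps sv tr)

lemma pf_b22: "S11 = xc*(d-1)*t*(c-1)*xa"
proof -
  have "xc*(d-1)*t*(c-1)*xa = xc*((c-1)*S11)" unfolding S11_def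
    by (simp add: algebra_simps sv tr)
  also have "\<dots> = S11" by (simp add: mult.assoc[symmetric] xc2)
  finally show ?thesis by simp
qed

lemma pf_b12: "B12 = - (xc*(d-c)*t*(c-1)*xa)"
  unfolding B12_def S21_def pf_b22 by (simp add: algebra_simps sv)
lemma pf_b13: "B13 = xa*(b-a)*t"
  unfolding B13_def S12_def by (simp add: algebra_simps sv)
lemma pf_b31: "B31 = t*(c-a)*xa"
  unfolding B31_def S21_def by (simp add: algebra_simps sv)
lemma pf_b21: "B21 = - (uca*(d-b)*t*(c-a)*xa)"
proof -
  have "(c-a)*B21 = - ((d-b)*t*(c-a)*xa)"
    unfolding B21_def S11_def S12_def by (simp add: algebra_simps sv tr)
  hence "uca*((c-a)*B21) = - (uca*(d-b)*t*(c-a)*xa)" by (simp add: mult.assoc)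
  thus ?thesis by (simp add: mult.assoc[symmetric] uca2)
qed
lemma pf_b11: "B11 = a*uca*(d - c*ai*b)*t*(c-a)*xa"
proof -
  have "(c-a)*(ai*B11) = (d - c*ai*b)*t*(c-a)*xa"
    unfolding B11_def S11_def S12_def S21_def by (simp add: algebra_simps sv tr)
  hence "a*(uca*((c-a)*(ai*B11))) = a*uca*(d - c*ai*b)*t*(c-a)*xa" by (simp add: mult.assoc)
  thus ?thesis by (simp add: mult.assoc[symmetric] uca2 a1)
qed
lemma ruba: "b*uba = 1 + a*uba" "uba*b = 1 + uba*a" "b*(uba*z) = z + a*(uba*z)" "uba*(b*z) = z + uba*(a*z)"
proof -
  show A: "b*uba = 1 + a*uba" "uba*b = 1 + uba*a" using uba1 uba2 by (simp_all add: algebra_simps)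
  show "b*(uba*z) = z + a*(uba*z)" "uba*(b*z) = z + uba*(a*z)"
    using assoc_rule[OF A(1), of z] assoc_rule[OF A(2), of z] by (simp_all add: algebra_simps)
qed
lemma ruca: "c*uca = 1 + a*uca" "uca*c = 1 + uca*a" "c*(uca*z) = z + a*(uca*z)" "uca*(c*z) = z + uca*(a*z)"
proof -
  show A: "c*uca = 1 + a*uca" "uca*c = 1 + uca*a" using uca1 uca2 by (simp_all add: algebra_simps)
  show "c*(uca*z) = z + a*(uca*z)" "uca*(c*z) = z + uca*(a*z)"
    using assoc_rule[OF A(1), of z] assoc_rule[OF A(2), of z] by (simp_all add: algebra_simps)
qed
lemma rudb: "d*udb = 1 + b*udb" "udb*d = 1 + udb*b" "d*(udb*z) = z + b*(udb*z)" "udb*(d*z) = z + udb*(b*z)"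
proof -
  show A: "d*udb = 1 + b*udb" "udb*d = 1 + udb*b" using udb1 udb2 by (simp_all add: algebra_simps)
  show "d*(udb*z) = z + b*(udb*z)" "udb*(d*z) = z + udb*(b*z)"
    using assoc_rule[OF A(1), of z] assoc_rule[OF A(2), of z] by (simp_all add: algebra_simps)
qed
lemma rudc: "d*udc = 1 + c*udc" "udc*d = 1 + udc*c" "d*(udc*z) = z + c*(udc*z)" "udc*(d*z) = z + udc*(c*z)"
proof -
  show A: "d*udc = 1 + c*udc" "udc*d = 1 + udc*c" using udc1 udc2 by (simp_all add: algebra_simps)
  show "d*(udc*z) = z + c*(udc*z)" "udc*(d*z) = z + udc*(c*z)"
    using assoc_rule[OF A(1), of z] assoc_rule[OF A(2), of z] by (simp_all add: algebra_simps)
qed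
lemma rsg: "d*ysg = 1 + c*(ai*(b*ysg))" "ysg*d = 1 + ysg*(c*(ai*b))"
   "d*(ysg*z) = z + c*(ai*(b*(ysg*z)))" "ysg*(d*z) = z + ysg*(c*(ai*(b*z)))"
proof -
  show A: "d*ysg = 1 + c*(ai*(b*ysg))" "ysg*d = 1 + ysg*(c*(ai*b))" using sg1 sg2 by (simp_all add: algebra_simps)
  show "d*(ysg*z) = z + c*(ai*(b*(ysg*z)))" "ysg*(d*z) = z + ysg*(c*(ai*(b*z)))"
    using assoc_rule[OF A(1), of z] assoc_rule[OF A(2), of z] by (simp_all add: algebra_simps)
qed

lemma inv3: "(p::'a::ring_1)*p' = 1 \<Longrightarrow> p'*p = 1 \<Longrightarrow> x*y = 1 \<Longrightarrow> y*x = 1 \<Longrightarrow> q*q' = 1 \<Longrightarrow> q'*q = 1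
   \<Longrightarrow> (p*x*q)*(q'*y*p') = 1 \<and> (q'*y*p')*(p*x*q) = 1"
proof -
  assume h: "p*p' = 1" "p'*p = 1" "x*y = 1" "y*x = 1" "q*q' = 1" "q'*q = 1"
  have "(p*x*q)*(q'*y*p') = p*(x*(q*q')*y)*p'" "(q'*y*p')*(p*x*q) = q'*(y*(p'*p)*x)*q"
    by (simp_all add: mult.assoc)
  thus ?thesis using h by simp
qed

end

context alg begin
lemma dual_facts:
  "(ci - ai)*(-(a*uca*c)) = 1" "(-(a*uca*c))*(ci - ai) = 1"
  "(bi - ai)*(-(a*uba*b)) = 1" "(-(a*uba*b))*(bi - ai) = 1"
  "(di - ci)*(-(c*udc*d)) = 1" "(-(c*udc*d))*(di - ci) = 1"
  "(di - bi)*(-(b*udb*d)) = 1" "(-(b*udb*d))*(di - bi) = 1"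
  "(di - bi*a*ci)*(-(d*ysg*c*ai*b)) = 1" "(-(d*ysg*c*ai*b))*(di - bi*a*ci) = 1"
proof -
  have e1: "ci - ai = -(ci*(c-a)*ai)" by (simp add: algebra_simps sv)
  have e2: "bi - ai = -(bi*(b-a)*ai)" by (simp add: algebra_simps sv)
  have e3: "di - ci = -(di*(d-c)*ci)" by (simp add: algebra_simps sv)
  have e4: "di - bi = -(di*(d-b)*bi)" by (simp add: algebra_simps sv)
  have e5: "di - bi*a*ci = -(bi*(a*ci)*(d - c*ai*b)*di)" by (simp add: algebra_simps sv)
  have i5: "(-(a*ci))*(-(c*ai)) = 1" "(-(c*ai))*(-(a*ci)) = 1" by (simp_all add: mult.assoc sv)
  from inv3[OF c2 c1 uca1 uca2 a2 a1] show "(ci - ai)*(-(a*uca*c)) = 1" "(-(a*uca*c))*(ci - ai) = 1"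
    unfolding e1 by (simp_all add: mult.assoc)
  from inv3[OF b2 b1 uba1 uba2 a2 a1] show "(bi - ai)*(-(a*uba*b)) = 1" "(-(a*uba*b))*(bi - ai) = 1"
    unfolding e2 by (simp_all add: mult.assoc)
  from inv3[OF d2 d1 udc1 udc2 c2 c1] show "(di - ci)*(-(c*udc*d)) = 1" "(-(c*udc*d))*(di - ci) = 1"
    unfolding e3 by (simp_all add: mult.assoc)
  from inv3[OF d2 d1 udb1 udb2 b2 b1] show "(di - bi)*(-(b*udb*d)) = 1" "(-(b*udb*d))*(di - bi) = 1"
    unfolding e4 by (simp_all add: mult.assoc)
  have i6: "(bi*(a*ci))*((c*ai)*b) = 1" "((c*ai)*b)*(bi*(a*ci)) = 1"
    by (simp_all add: mult.assoc sv)
  from inv3[OF i6 sg1 sg2 d2 d1] show "(di - bi*a*ci)*(-(d*ysg*c*ai*b)) = 1" "(-(d*ysg*c*ai*b))*(di - bi*a*ci) = 1"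
    unfolding e5 by (simp_all add: mult.assoc)
qed


lemma dual_x:
  "(ai-1)*(-(xa*a)) = 1" "(-(xa*a))*(ai-1) = 1"
  "(bi-1)*(-(xb*b)) = 1" "(-(xb*b))*(bi-1) = 1"
  "(ci-1)*(-(xc*c)) = 1" "(-(xc*c))*(ci-1) = 1"
  "(di-1)*(-(xd*d)) = 1" "(-(xd*d))*(di-1) = 1"
  by (simp_all add: algebra_simps sv)

lemma dual_t: "((di-1) - (bi-1)*(-(xa*a))*(ci-1))*tp = 1" "tp*((di-1) - (bi-1)*(-(xa*a))*(ci-1)) = 1"
  "((d-1) + (c-1)*(-(xa*a))*ai*(b-1))*t = 1" "t*((d-1) + (c-1)*(-(xa*a))*ai*(b-1)) = 1"
proof -
  have e: "(di-1) - (bi-1)*(-(xa*a))*(ci-1) = (di-1) + (bi-1)*xa*a*(ci-1)" by (simp add: mult.assoc)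
  have f: "(d-1) + (c-1)*(-(xa*a))*ai*(b-1) = (d-1) - (c-1)*xa*(b-1)" by (simp add: mult.assoc sva(3))
  show "((di-1) - (bi-1)*(-(xa*a))*(ci-1))*tp = 1" "tp*((di-1) - (bi-1)*(-(xa*a))*(ci-1)) = 1"
    unfolding e by (fact tp1, fact tp2)
  show "((d-1) + (c-1)*(-(xa*a))*ai*(b-1))*t = 1" "t*((d-1) + (c-1)*(-(xa*a))*ai*(b-1)) = 1"
    unfolding f by (fact t1, fact t2)
qed

lemma dual: "alg ai ci bi di a c b d (-(xa*a)) (-(xc*c)) (-(xb*b)) (-(xd*d)) (-(a*uca*c)) (-(a*uba*b))
   (-(c*udc*d)) (-(b*udb*d)) (-(d*ysg*c*ai*b)) tp t"
  by unfold_locales (simp_all only: a1 a2 b1 b2 c1 c2 d1 d2 dual_facts dual_x dual_t)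
end

context alg begin

definition "rA = a - b*di*c"
definition "h1 = (d-c)*uba*rA*ci"
definition "h2 = -((d-b)*xb*(d-1)*di)"
definition "h3 = (c-a)*xa*(c-1)*ci"

lemma lin0: "(x::'a) = y - z \<Longrightarrow> y = 0 \<Longrightarrow> z = 0 \<Longrightarrow> x = 0" by simp

lemma row2: "S11 = -(S12*(d-1)*xb)" "B21 = S12*(d-b)*xb"
proof -
  have "S11*(b-1) + S12*(d-1) = 0"
    by (rule lin0[OF _ Brel(17) Brel(11)]) (simp add: algebra_simps)
  hence "(S11*(b-1) + S12*(d-1))*xb = 0" by simp
  hence "S11*(b-1)*xb = -(S12*(d-1))*xb" by (simp add: distrib_right eq_neg_iff_add_eq_0)
  thus A: "S11 = -(S12*(d-1)*xb)" by (simp add: mult.assoc xb1)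
  have "B21 = -S11 - S12" using Brel(11) by (simp add: eq_neg_iff_add_eq_0 algebra_simps)
  thus "B21 = S12*(d-b)*xb" unfolding A by (simp add: algebra_simps sv)
qed

lemma row1: "B12 = -(B13*(d-c)*uba)" "B13*((d-1) - (d-c)*uba*(b-1)) = -1"
proof -
  have "B12*(b-a) + B13*(d-c) = 0"
    by (rule lin0[OF _ Brel(16) Brel(13)]) (simp add: algebra_simps)
  hence "(B12*(b-a) + B13*(d-c))*uba = 0" by simp
  hence "B12*(b-a)*uba = -(B13*(d-c))*uba" by (simp add: distrib_right eq_neg_iff_add_eq_0)
  thus A: "B12 = -(B13*(d-c)*uba)" by (simp add: mult.assoc uba1)
  have "B12*(b-1) + B13*(d-1) + 1 = (B11 + B12*b + B13*d) - (B11 + B12 + B13) + 1" by (simp add: algebra_simps)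
  also have "\<dots> = 0" using Brel(16) Brel(10) by simp
  finally have "B12*(b-1) + B13*(d-1) + 1 = 0" .
  thus "B13*((d-1) - (d-c)*uba*(b-1)) = -1" unfolding A by (simp add: algebra_simps eq_neg_iff_add_eq_0)
qed

lemma Y: "B13*h1 = B11*(ci*(d-c)*di)"
  "S12*h2 = B21*(-((d-1)*di))"
  "t*h3 = B31*((c-1)*ci)"
  "B13*h1 = B12*(-(rA*ci))"
  "S12*h2 = S11*((d-b)*di)"
  "t*h3 = S21*(-((c-a)*ci))"
proof -
  show "t*h3 = B31*((c-1)*ci)" unfolding pf_b31 h3_def by (simp add: mult.assoc)
  show "t*h3 = S21*(-((c-a)*ci))" unfolding S21_def h3_def by (simp add: algebra_simps sv)
  show "S12*h2 = B21*(-((d-1)*di))" unfolding row2 h2_def by (simp add: mult.assoc)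
  show "S12*h2 = S11*((d-b)*di)" unfolding row2 h2_def by (simp add: algebra_simps sv)
  show "B13*h1 = B12*(-(rA*ci))" unfolding row1 h1_def by (simp add: mult.assoc)
  have B11: "B11 = 1 - B12 - B13" using Brel(10) by (simp add: algebra_simps)
  have K: "1 = - (B13*((d-1) - (d-c)*uba*(b-1)))" using row1(2) by simp
  have "B11 = B13*(-((d-1) - (d-c)*uba*(b-1)) + (d-c)*uba - 1)"
    unfolding B11 row1(1) by (subst K) (simp add: algebra_simps)
  moreover have "h1 = (-((d-1) - (d-c)*uba*(b-1)) + (d-c)*uba - 1)*(ci*(d-c)*di)"
    unfolding h1_def rA_def by (simp add: algebra_simps sv ruba)
  ultimately show "B13*h1 = B11*(ci*(d-c)*di)" by (simp add: mult.assoc)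
qed
end

context alg begin

lemma cancl: "(u::'a)*w = 1 \<Longrightarrow> u*(w*z) = z" by (simp add: assoc_rule)

lemma assoc3: "(x::'a)*y*w = x'*y'*w' \<Longrightarrow> x*(y*(w*z)) = x'*(y'*(w'*z))"
  by (simp add: mult.assoc[symmetric])

lemma sgr: "(d - c*(ai*b))*ysg = 1" "ysg*(d - c*(ai*b)) = 1" using sg1 sg2 by (simp_all add: mult.assoc)

lemmas canc = cancl[OF uba1] cancl[OF uba2] cancl[OF uca1] cancl[OF uca2] cancl[OF udb1] cancl[OF udb2]
  cancl[OF udc1] cancl[OF udc2] cancl[OF sgr(1)] cancl[OF sgr(2)] uba1 uba2 uca1 uca2 udb1 udb2 udc1 udc2 sgr

definition "rAi = ai*b*ysg*d*bi"

lemma rA_eq: "rA = b*di*(d - c*ai*b)*bi*a"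
  unfolding rA_def by (simp add: algebra_simps sv)

lemma rA_inv: "rA*rAi = 1" "rAi*rA = 1"
proof -
  have "(b*di*(d - c*ai*b)*bi*a)*(ai*b*ysg*d*bi) = b*di*((d - c*ai*b)*((bi*(a*ai)*b)*ysg))*d*bi"
    by (simp add: mult.assoc)
  also have "\<dots> = 1" by (simp add: sv canc mult.assoc)
  finally show "rA*rAi = 1" unfolding rA_eq rAi_def .
  have "(ai*b*ysg*d*bi)*(b*di*(d - c*ai*b)*bi*a) = ai*b*(ysg*((d*(bi*b)*di)*(d - c*ai*b)))*bi*a"
    by (simp add: mult.assoc)
  also have "\<dots> = 1" by (simp add: sv canc mult.assoc)
  finally show "rAi*rA = 1" unfolding rA_eq rAi_def .
qed

lemma core:
  "(ci*(d-c)*di)*(-(d*udc*c*ai*(b-a)*bi)) + (-((d-1)*di))*(-(d*xd*(b-1)*bi)) + ((c-1)*ci)*(-(c*xc*(a-1)*ai)) = 0"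
  "(ci*(d-c)*di) + (-((d-1)*di)) + ((c-1)*ci) = 0"
  "(-(rA*ci))*(c*rAi*(b-a)) + ((d-b)*di)*(d*udb*(b-1)) + (-((c-a)*ci))*(c*uca*(a-1)) = 0"
  "(-(rA*ci)) + ((d-b)*di) + (-((c-a)*ci)) = 0"
  "h1*(c*rAi*(b-a)) + h2*(d*udb*(b-1)) + h3*(c*uca*(a-1)) = 0"
  "h1*(-(d*udc*c*ai*(b-a)*bi)) + h2*(-(d*xd*(b-1)*bi)) + h3*(-(c*xc*(a-1)*ai)) = 0"
proof -
  show "(ci*(d-c)*di)*(-(d*udc*c*ai*(b-a)*bi)) + (-((d-1)*di))*(-(d*xd*(b-1)*bi)) + ((c-1)*ci)*(-(c*xc*(a-1)*ai)) = 0"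
  proof -
    have "(ci*(d-c)*di)*(-(d*udc*c*ai*(b-a)*bi)) = -(ci*((d-c)*udc)*c*ai*(b-a)*bi)"
      by (simp add: mult.assoc sv)
    also have "\<dots> = -(ai*(b-a)*bi)" by (simp add: canc mult.assoc sv)
    finally show ?thesis by (simp add: algebra_simps sv)
  qed
  show "(ci*(d-c)*di) + (-((d-1)*di)) + ((c-1)*ci) = 0" by (simp add: algebra_simps sv)
  show "(-(rA*ci))*(c*rAi*(b-a)) + ((d-b)*di)*(d*udb*(b-1)) + (-((c-a)*ci))*(c*uca*(a-1)) = 0"
  proof -
    have "(-(rA*ci))*(c*rAi*(b-a)) = -(rA*(ci*c)*rAi*(b-a))" by (simp add: mult.assoc)
    also have "\<dots> = -(b-a)" by (simp add: c2 rA_inv mult.assoc)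
    finally have 1: "(-(rA*ci))*(c*rAi*(b-a)) = -(b-a)" .
    have 2: "((d-b)*di)*(d*udb*(b-1)) = b - 1" by (simp add: mult.assoc sv canc)
    have 3: "(-((c-a)*ci))*(c*uca*(a-1)) = -(a-1)" by (simp add: mult.assoc sv canc)
    show ?thesis unfolding 1 2 3 by (simp add: algebra_simps)
  qed
  show "(-(rA*ci)) + ((d-b)*di) + (-((c-a)*ci)) = 0" unfolding rA_def by (simp add: algebra_simps sv)
  show "h1*(c*rAi*(b-a)) + h2*(d*udb*(b-1)) + h3*(c*uca*(a-1)) = 0"
  proof -
    have 1: "h1*(c*rAi*(b-a)) = d - c" unfolding h1_def
      by (simp add: mult.assoc sv rA_inv cancl[OF rA_inv(1)] cancl[OF rA_inv(2)] canc)
    have e2: "(d-b)*xb*(d-1) = (d-1)*xb*(d-b)" by (simp add: algebra_simps sv)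
    have 2: "h2*(d*udb*(b-1)) = -(d-1)" unfolding h2_def
    proof -
      have "-((d-b)*xb*(d-1)*di)*(d*udb*(b-1)) = -((d-1)*xb*((d-b)*udb)*(b-1))"
        by (simp add: assoc3[OF e2] mult.assoc svd(4))
      thus "-((d-b)*xb*(d-1)*di)*(d*udb*(b-1)) = -(d-1)" by (simp add: canc mult.assoc xb2)
    qed
    have e3: "(c-a)*xa*(c-1) = (c-1)*xa*(c-a)" by (simp add: algebra_simps sv)
    have 3: "h3*(c*uca*(a-1)) = c - 1" unfolding h3_def
    proof -
      have "((c-a)*xa*(c-1)*ci)*(c*uca*(a-1)) = (c-1)*xa*((c-a)*uca)*(a-1)"
        by (simp add: assoc3[OF e3] mult.assoc svc(4))
      thus "((c-a)*xa*(c-1)*ci)*(c*uca*(a-1)) = c-1" by (simp add: canc mult.assoc xa2)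
    qed
    show ?thesis unfolding 1 2 3 by (simp add: algebra_simps)
  qed
  show "h1*(-(d*udc*c*ai*(b-a)*bi)) + h2*(-(d*xd*(b-1)*bi)) + h3*(-(c*xc*(a-1)*ai)) = 0"
  proof -
    have s1: "rA*ci*d = a*ci*(d-c) - (b-a)" unfolding rA_def by (simp add: algebra_simps sv)
    have "h1*(-(d*udc*c*ai*(b-a)*bi)) = -((d-c)*uba*(rA*ci*d)*udc*c*ai*(b-a)*bi)"
      unfolding h1_def by (simp add: mult.assoc)
    also have "\<dots> = -((d-c)*uba*(a*ci*(d-c))*udc*c*ai*(b-a)*bi) + (d-c)*uba*(b-a)*udc*c*ai*(b-a)*bi"
      unfolding s1 by (simp add: algebra_simps)
    also have "(d-c)*uba*(a*ci*(d-c))*udc*c*ai*(b-a)*bi = (d-c)*bi"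
      by (simp add: mult.assoc canc sv)
    also have "(d-c)*uba*(b-a)*udc*c*ai*(b-a)*bi = c*ai*(b-a)*bi"
      by (simp add: mult.assoc canc sv)
    finally have 1: "h1*(-(d*udc*c*ai*(b-a)*bi)) = -((d-c)*bi) + c*ai*(b-a)*bi" .
    have 2: "h2*(-(d*xd*(b-1)*bi)) = (d-b)*bi" unfolding h2_def
      by (simp add: mult.assoc svd(4) cancl[OF xd1] cancl[OF xb2])
    have 3: "h3*(-(c*xc*(a-1)*ai)) = -((c-a)*ai)" unfolding h3_def
      by (simp add: mult.assoc svc(4) cancl[OF xc1] cancl[OF xa2])
    show ?thesis unfolding 1 2 3 by (simp add: algebra_simps sv)
  qed
qed

end

context alg begin

definition "ell = udc*(c-1) - uba*(a-1)"
definition "Dp = (di-1) + (bi-1)*xa*a*(ci-1)"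

lemma rho3: "h1 + h2 + h3 = (d-c)*ell*b*xb*Dp"
proof -
  have br: "(a - b*di*c)*ci = (b-a)*(xb*(d-b)*di) - ((a-1)*b*xb*(di-1) - a*(ci-1))"
    by (simp add: algebra_simps sv)
  have "h1 = (d-c)*(uba*(b-a))*(xb*(d-b)*di) - (d-c)*uba*((a-1)*b*xb*(di-1) - a*(ci-1))"
    unfolding h1_def rA_def by (subst mult.assoc, subst br) (simp add: algebra_simps)
  hence H1: "h1 = (d-c)*(xb*(d-b)*di) - (d-c)*uba*((a-1)*b*xb*(di-1) - a*(ci-1))"
    by (simp add: uba2)
  have E: "(d-c)*ell = (c-1) - (d-c)*uba*(a-1)" unfolding ell_def
    by (simp add: right_diff_distrib mult.assoc[symmetric] udc1)
  show ?thesis unfolding H1 h2_def h3_def E Dp_def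
    by (simp add: algebra_simps sv)
qed
end

context alg begin
lemma ell_B12: "B12*((b-a)*ell) = 1"
proof -
  have r: "B12*(b-a) + B13*(d-c) = 0"
    by (rule lin0[OF _ Brel(16) Brel(13)]) (simp add: algebra_simps)
  have s: "B12*(a-1) + B13*(c-1) + 1 = (B11 + B12*a + B13*c) - (B11 + B12 + B13) + 1" by (simp add: algebra_simps)
  also have "\<dots> = 0" using Brel(13) Brel(10) by simp
  finally have s: "B12*(a-1) + B13*(c-1) + 1 = 0" .
  have 1: "B12*((b-a)*ell) = (B12*(b-a))*udc*(c-1) - B12*((b-a)*uba)*(a-1)"
    unfolding ell_def by (simp add: algebra_simps)
  have "B12*(b-a) = -(B13*(d-c))" using r by (simp add: eq_neg_iff_add_eq_0)
  hence 2: "(B12*(b-a))*udc*(c-1) = -(B13*(c-1))" by (simp add: mult.assoc canc)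
  have 3: "B12*((b-a)*uba)*(a-1) = B12*(a-1)" by (simp add: uba1)
  have "B12*((b-a)*ell) = -(B13*(c-1)) - B12*(a-1)" unfolding 1 2 3 ..
  also have "\<dots> = 1" using s by (simp add: algebra_simps eq_neg_iff_add_eq_0)
  finally show ?thesis .
qed
end

locale alg2 = alg a b c d ai bi ci di xa xb xc xd uba uca udb udc ysg t tp +
  D: alg ai ci bi di a c b d "-(xa*a)" "-(xc*c)" "-(xb*b)" "-(xd*d)" "-(a*uca*c)" "-(a*uba*b)"
   "-(c*udc*d)" "-(b*udb*d)" "-(d*ysg*c*ai*b)" tp t
  for a b c d ai bi ci di xa xb xc xd uba uca udb udc ysg t tp :: "'a::ring_1"

lemma (in alg) alg2: "alg2 a b c d ai bi ci di xa xb xc xd uba uca udb udc ysg t tp"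
  unfolding alg2_def using alg_axioms dual by simp

context alg2 begin

lemma Mid_c11: "(d*udb*(b-1) - c*uca*(a-1))*D.B11 = -(d*udb - c*uca)"
proof -
  have e1: "(b-1)*D.B11 + 1 = (d-b)*di*D.B31"
  proof -
    have "(b-1)*D.B11 + 1 - (d-b)*di*D.B31 = b*(D.B11 + bi*D.B21 + di*D.B31) - (D.B11 + D.B21 + D.B31) + 1"
      by (simp add: algebra_simps sv)
    thus ?thesis using D.Brel(1) D.Brel(7) by simp
  qed
  have e2: "(a-1)*D.B11 + 1 = (c-a)*ci*D.B31"
  proof -
    have "(a-1)*D.B11 + 1 - (c-a)*ci*D.B31 = a*(D.B11 + ai*D.B21 + ci*D.B31) - (D.B11 + D.B21 + D.B31) + 1"
      by (simp add: algebra_simps sv)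
    thus ?thesis using D.Brel(1) D.Brel(4) by simp
  qed
  have "(d*udb*(b-1) - c*uca*(a-1))*D.B11 + (d*udb - c*uca) = d*udb*((b-1)*D.B11 + 1) - c*uca*((a-1)*D.B11 + 1)"
    by (simp add: algebra_simps)
  also have "\<dots> = 0" unfolding e1 e2 by (simp add: mult.assoc canc sv)
  finally show ?thesis using eq_neg_iff_add_eq_0 by blast
qed

lemma Zc3: "tp = c*uca*(a-1)*D.B13" "tp = -(c*xc*(a-1)*ai)*D.S12"
proof -
  have "(ai-1)*D.S12 + (ci-1)*tp = 0"
    by (rule lin0[OF _ D.Brel(6) D.Brel(3)]) (simp add: algebra_simps)
  hence "(-(xa*a))*((ai-1)*D.S12 + (ci-1)*tp) = 0" by simp
  moreover have m: "xa*a*(ai-1) = -1" using D.xa2 by (metis minus_mult_left minus_equation_iff)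
  ultimately have c23: "D.S12 = xa*a*(ci-1)*tp"
    by (simp add: distrib_left mult.assoc[symmetric] eq_neg_iff_add_eq_0)
  have c13: "D.B13 = -(xa*a*(ci-1)*tp + tp)" using D.Brel(3) c23 by (simp add: eq_neg_iff_add_eq_0 algebra_simps)
  show "tp = -(c*xc*(a-1)*ai)*D.S12" unfolding c23 by (simp add: algebra_simps sv)
  have k: "(a-1)*(xa*a*(ci-1)) + (a-1) = -((c-a)*ci)" by (simp add: algebra_simps sv)
  have "c*uca*(a-1)*D.B13 = -(c*uca*((a-1)*(xa*a*(ci-1)) + (a-1))*tp)" unfolding c13 by (simp add: algebra_simps)
  also have "\<dots> = tp" unfolding k by (simp add: mult.assoc canc sv)
  finally show "tp = c*uca*(a-1)*D.B13" by simp
qed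

lemma Zc2: "D.S21 = d*udb*(b-1)*D.B12" "D.S21 = -(d*xd*(b-1)*bi)*D.S11"
proof -
  have "(bi-1)*D.S11 + (di-1)*D.S21 = 0"
    by (rule lin0[OF _ D.Brel(8) D.Brel(2)]) (simp add: algebra_simps)
  hence "(-(xb*b))*((bi-1)*D.S11 + (di-1)*D.S21) = 0" by simp
  moreover have m: "xb*b*(bi-1) = -1" using D.xc2 by (metis minus_mult_left minus_equation_iff)
  ultimately have c22: "D.S11 = xb*b*(di-1)*D.S21"
    by (simp add: distrib_left mult.assoc[symmetric] eq_neg_iff_add_eq_0)
  have c12: "D.B12 = -(xb*b*(di-1)*D.S21 + D.S21)" using D.Brel(2) c22 by (simp add: eq_neg_iff_add_eq_0 algebra_simps)
  show "D.S21 = -(d*xd*(b-1)*bi)*D.S11" unfolding c22 by (simp add: algebra_simps sv)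
  have k: "(b-1)*(xb*b*(di-1)) + (b-1) = -((d-b)*di)" by (simp add: algebra_simps sv)
  have "d*udb*(b-1)*D.B12 = -(d*udb*((b-1)*(xb*b*(di-1)) + (b-1))*D.S21)" unfolding c12 by (simp add: algebra_simps)
  also have "\<dots> = D.S21" unfolding k by (simp add: mult.assoc canc sv)
  finally show "D.S21 = d*udb*(b-1)*D.B12" by simp
qed

lemma Zc1: "D.B31 = c*rAi*(b-a)*D.B11" "D.B31 = -(d*udc*c*ai*(b-a)*bi)*D.B21"
proof -
  have "(ai - bi)*D.B21 + (ci - di)*D.B31 = 0"
    by (rule lin0[OF _ D.Brel(4) D.Brel(7)]) (simp add: algebra_simps)
  hence "(b*uba*a)*((ai - bi)*D.B21 + (ci - di)*D.B31) = 0" by simp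
  moreover have "b*uba*a*(ai - bi) = 1"
  proof -
    have "a*(ai - bi) = (b-a)*bi" by (simp add: algebra_simps sv)
    hence "b*uba*a*(ai - bi) = b*(uba*(b-a))*bi" by (simp add: mult.assoc)
    thus ?thesis by (simp add: uba2 b1)
  qed
  ultimately have c21: "D.B21 = -(b*uba*a*(ci - di)*D.B31)"
    by (simp add: distrib_left mult.assoc[symmetric] eq_neg_iff_add_eq_0)
  show "D.B31 = -(d*udc*c*ai*(b-a)*bi)*D.B21"
  proof -
    have "-(d*udc*c*ai*(b-a)*bi)*D.B21 = d*udc*c*ai*((b-a)*(bi*b)*uba)*a*(ci - di)*D.B31"
      unfolding c21 by (simp add: mult.assoc)
    also have "\<dots> = d*udc*(c*(ai*a)*(ci - di))*D.B31" by (simp add: b2 uba1 mult.assoc)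
    also have "c*(ai*a)*(ci - di) = (d-c)*di" by (simp add: algebra_simps sv)
    also have "d*udc*((d-c)*di)*D.B31 = D.B31" by (simp add: mult.assoc canc sv)
    finally show ?thesis by simp
  qed
  have c11: "D.B11 = -(ai*D.B21 + ci*D.B31)" using D.Brel(4) by (simp add: eq_neg_iff_add_eq_0 algebra_simps)
  have k1: "(b-a)*ai*b = b*ai*(b-a)" by (simp add: algebra_simps sv)
  have "(b-a)*D.B11 = ((b-a)*ai*b)*uba*a*(ci - di)*D.B31 - (b-a)*ci*D.B31"
    unfolding c11 c21 by (simp add: algebra_simps)
  also have "((b-a)*ai*b)*uba*a*(ci - di)*D.B31 = b*(ci - di)*D.B31"
    unfolding k1 by (simp add: mult.assoc canc sv)
  finally have "(b-a)*D.B11 = rA*ci*D.B31" unfolding rA_def by (simp add: algebra_simps sv)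
  hence "c*rAi*((b-a)*D.B11) = c*(rAi*rA)*ci*D.B31" by (simp add: mult.assoc)
  thus "D.B31 = c*rAi*(b-a)*D.B11" by (simp add: rA_inv mult.assoc sv)
qed

end


lemma rinv_left: "is_unit x \<Longrightarrow> x*y = z \<Longrightarrow> rinv x * z = (y::'a::ring_1)"
  using unit_rinv by (metis mult.assoc mult_1_left)
lemma rinv_right: "is_unit x \<Longrightarrow> z = y*x \<Longrightarrow> z * rinv x = (y::'a::ring_1)"
  using unit_rinv by (metis mult.assoc mult_1_right)
lemma YZ: "q*b*h = (y::'a::ring_1) \<Longrightarrow> c*p = z \<Longrightarrow> q*(b*h*c)*p = y*z"
  by (metis mult.assoc)

context alg begin
lemma units0: "is_unit a" "is_unit ai" "is_unit b" "is_unit bi" "is_unit c" "is_unit ci" "is_unit d" "is_unit di"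
  "is_unit (a-1)" "is_unit xa" "is_unit (b-1)" "is_unit xb" "is_unit (c-1)" "is_unit xc" "is_unit (d-1)" "is_unit xd"
  "is_unit (b-a)" "is_unit uba" "is_unit (c-a)" "is_unit uca" "is_unit (d-b)" "is_unit udb" "is_unit (d-c)" "is_unit udc"
  "is_unit t" "is_unit ((d-1) - (c-1)*xa*(b-1))" "is_unit tp" "is_unit Dp" "is_unit rA" "is_unit rAi"
  "is_unit (d - c*ai*b)" "is_unit ysg"
  using a1 a2 b1 b2 c1 c2 d1 d2 xa1 xa2 xb1 xb2 xc1 xc2 xd1 xd2 uba1 uba2 uca1 uca2 udb1 udb2 udc1 udc2
    t1 t2 tp1 tp2 rA_inv sg1 sg2 unfolding Dp_def by (meson unitI)+

lemma unitsB: "is_unit B11" "is_unit B12" "is_unit B13" "is_unit B21" "is_unit S11" "is_unit S12"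
  "is_unit B31" "is_unit S21" "is_unit t"
  unfolding pf_b11 pf_b12 pf_b13 pf_b21 pf_b22 pf_b31 S12_def S21_def
  by (intro unit_mult unit_uminus units0)+

lemma units_h: "is_unit h1" "is_unit h2" "is_unit h3"
  unfolding h1_def h2_def h3_def by (intro unit_mult unit_uminus units0)+

lemma unit_ell: "is_unit ell"
proof -
  have "rinv B12 = (b-a)*ell" using rinv_left[OF unitsB(2), of "(b-a)*ell" 1] ell_B12 unit_rinv[OF unitsB(2)]
    by simp
  hence "ell = uba*rinv B12" using uba2 by (simp add: mult.assoc[symmetric])
  thus ?thesis using unit_mult units0(18) unitsB(2) unit_rinv unitI by metis
qed
end

lemma YZ2: "q*b*h = (y::'a::ring_1) \<Longrightarrow> c*p = z \<Longrightarrow> q*((b*h*c)*p) = y*z"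
  by (metis mult.assoc)

context alg begin
lemma Yr:
  "rinv B11 * B13 * h1 = ci*(d-c)*di"
  "rinv B21 * S12 * h2 = -((d-1)*di)"
  "rinv B31 * t * h3 = (c-1)*ci"
  "rinv B12 * B13 * h1 = -(rA*ci)"
  "rinv S11 * S12 * h2 = (d-b)*di"
  "rinv S21 * t * h3 = -((c-a)*ci)"
  "rinv B13 * B13 * h1 = h1"
  "rinv S12 * S12 * h2 = h2"
  "rinv t * t * h3 = h3"
proof -
  show "rinv B11 * B13 * h1 = ci*(d-c)*di" using rinv_left[OF unitsB(1) Y(1)[symmetric]] by (simp add: mult.assoc)
  show "rinv B21 * S12 * h2 = -((d-1)*di)" using rinv_left[OF unitsB(4) Y(2)[symmetric]] by (simp add: mult.assoc)
  show "rinv B31 * t * h3 = (c-1)*ci" using rinv_left[OF unitsB(7) Y(3)[symmetric]] by (simp add: mult.assoc)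
  show "rinv B12 * B13 * h1 = -(rA*ci)" using rinv_left[OF unitsB(2) Y(4)[symmetric]] by (simp add: mult.assoc)
  show "rinv S11 * S12 * h2 = (d-b)*di" using rinv_left[OF unitsB(5) Y(5)[symmetric]] by (simp add: mult.assoc)
  show "rinv S21 * t * h3 = -((c-a)*ci)" using rinv_left[OF unitsB(8) Y(6)[symmetric]] by (simp add: mult.assoc)
  show "rinv B13 * B13 * h1 = h1" using unit_rinv[OF unitsB(3)] by simp
  show "rinv S12 * S12 * h2 = h2" using unit_rinv[OF unitsB(6)] by simp
  show "rinv t * t * h3 = h3" using unit_rinv[OF unitsB(9)] by simp
qed
end

context alg2 begin
lemma Zr:
  "D.B31 * rinv D.B11 = c*rAi*(b-a)"
  "D.B31 * rinv D.B21 = -(d*udc*c*ai*(b-a)*bi)"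
  "D.B31 * rinv D.B31 = 1"
  "D.S21 * rinv D.B12 = d*udb*(b-1)"
  "D.S21 * rinv D.S11 = -(d*xd*(b-1)*bi)"
  "D.S21 * rinv D.S21 = 1"
  "tp * rinv D.B13 = c*uca*(a-1)"
  "tp * rinv D.S12 = -(c*xc*(a-1)*ai)"
  "tp * rinv tp = 1"
proof -
  show "D.B31 * rinv D.B11 = c*rAi*(b-a)" using rinv_right[OF D.unitsB(1) Zc1(1)] by simp
  show "D.B31 * rinv D.B21 = -(d*udc*c*ai*(b-a)*bi)" using rinv_right[OF D.unitsB(4) Zc1(2)] by simp
  show "D.B31 * rinv D.B31 = 1" using unit_rinv[OF D.unitsB(7)] by simp
  show "D.S21 * rinv D.B12 = d*udb*(b-1)" using rinv_right[OF D.unitsB(2) Zc2(1)] by simp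
  show "D.S21 * rinv D.S11 = -(d*xd*(b-1)*bi)" using rinv_right[OF D.unitsB(5) Zc2(2)] by simp
  show "D.S21 * rinv D.S21 = 1" using unit_rinv[OF D.unitsB(8)] by simp
  show "tp * rinv D.B13 = c*uca*(a-1)" using rinv_right[OF D.unitsB(3) Zc3(1)] by simp
  show "tp * rinv D.S12 = -(c*xc*(a-1)*ai)" using rinv_right[OF D.unitsB(6) Zc3(2)] by simp
  show "tp * rinv tp = 1" using unit_rinv[OF D.unitsB(9)] by simp
qed
definition "rho1 = (ci*(d-c)*di)*(c*rAi*(b-a)) + (-((d-1)*di))*(d*udb*(b-1)) + ((c-1)*ci)*(c*uca*(a-1))"
definition "rho2 = (-(rA*ci))*(-(d*udc*c*ai*(b-a)*bi)) + ((d-b)*di)*(-(d*xd*(b-1)*bi)) + (-((c-a)*ci))*(-(c*xc*(a-1)*ai))"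
lemma G7: "J2 (mat3 B11 B12 B13 B21 S11 S12 B31 S21 t) **
  (mat3 (B13*h1*D.B31) 0 0 0 (S12*h2*D.S21) 0 0 0 (t*h3*tp) ** J2 (mat3 D.B11 D.B12 D.B13 D.B21 D.S11 D.S12 D.B31 D.S21 tp))
  = mat3 rho1 0 0 0 rho2 0 0 0 ((d-c)*ell*b*xb*Dp)"
proof -
  note F = YZ2[OF Yr(1) Zr(1)] YZ2[OF Yr(1) Zr(2)] YZ2[OF Yr(1) Zr(3)] YZ2[OF Yr(2) Zr(4)] YZ2[OF Yr(2) Zr(5)] YZ2[OF Yr(2) Zr(6)] YZ2[OF Yr(3) Zr(7)] YZ2[OF Yr(3) Zr(8)] YZ2[OF Yr(3) Zr(9)] YZ2[OF Yr(4) Zr(1)] YZ2[OF Yr(4) Zr(2)] YZ2[OF Yr(4) Zr(3)] YZ2[OF Yr(5) Zr(4)] YZ2[OF Yr(5) Zr(5)] YZ2[OF Yr(5) Zr(6)] YZ2[OF Yr(6) Zr(7)] YZ2[OF Yr(6) Zr(8)] YZ2[OF Yr(6) Zr(9)] YZ2[OF Yr(7) Zr(1)] YZ2[OF Yr(7) Zr(2)] YZ2[OF Yr(7) Zr(3)] YZ2[OF Yr(8) Zr(4)] YZ2[OF Yr(8) Zr(5)] YZ2[OF Yr(8) Zr(6)] YZ2[OF Yr(9) Zr(7)] YZ2[OF Yr(9) Zr(8)] YZ2[OF Yr(9) Zr(9)]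
  show ?thesis unfolding J2_mat3 mat3_mult mat3_eq_iff
    apply (simp only: mult_zero_left mult_zero_right add_0_left add_0_right)
    apply (simp only: F)
    apply (intro conjI)
    apply (simp_all only: rho1_def rho2_def core rho3[symmetric] mult_1_right)
    done
qed
end

lemma left_inv_unit: "is_unit (x::'a::ring_1) \<Longrightarrow> y*x = 1 \<Longrightarrow> x*y = 1"
proof -
  assume u: "is_unit x" and h: "y*x = 1"
  have "y = y*(x*rinv x)" using unit_rinv[OF u] by simp
  also have "\<dots> = rinv x" using h by (simp add: mult.assoc[symmetric])
  finally show "x*y = 1" using unit_rinv[OF u] by simp
qed

context alg begin
lemma E_eq: "d*udb - c*uca = -(a*uca*(d - c*ai*b)*udb)"
proof -
  have 1: "d*udb - c*uca = b*udb - a*uca" by (simp add: rudb ruca algebra_simps)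
  have 2: "d - c*ai*b = (d-b) - (c-a)*ai*b" by (simp add: algebra_simps sv)
  have "a*uca*(d - c*ai*b)*udb = a*uca*((d-b)*udb) - a*(uca*(c-a))*ai*b*udb"
    unfolding 2 by (simp add: algebra_simps)
  also have "\<dots> = a*uca - b*udb" by (simp add: udb1 uca2 mult.assoc sv)
  finally show ?thesis unfolding 1 by simp
qed

lemma unit_E: "is_unit (d*udb - c*uca)"
  unfolding E_eq by (intro unit_mult unit_uminus units0)+

lemma ell_B12': "ell*(B12*(b-a)) = 1"
proof -
  have "rinv B12 = (b-a)*ell" using rinv_left[OF unitsB(2), of "(b-a)*ell" 1] ell_B12 unit_rinv[OF unitsB(2)]
    by simp
  hence "ell = uba*rinv B12" using uba2 by (simp add: mult.assoc[symmetric])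
  hence "ell*(B12*(b-a)) = uba*(rinv B12*B12)*(b-a)" by (simp add: mult.assoc)
  thus ?thesis using unit_rinv[OF unitsB(2)] uba2 by simp
qed
end

context alg2 begin
lemma omega:
  "rinv (d*udb - c*uca) * (d*udb*(b-1) - c*uca*(a-1)) * ell * (B13*h1*D.B31) = 1"
  "(B13*h1*D.B31) * (rinv (d*udb - c*uca) * (d*udb*(b-1) - c*uca*(a-1)) * ell) = 1"
  "is_unit (B13*h1*D.B31)"
proof -
  have 1: "B13*h1 = -(B12*(rA*ci))" using Y(4) by simp
  have "B13*h1*D.B31 = -(B12*(rA*ci)*(c*rAi*(b-a)*D.B11))" unfolding 1 by (subst Zc1(1)) simp
  also have "\<dots> = -(B12*(b-a)*D.B11)" by (simp add: mult.assoc sv cancl[OF rA_inv(1)])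
  finally have k: "B13*h1*D.B31 = -(B12*(b-a)*D.B11)" .
  have "rinv (d*udb - c*uca) * (d*udb*(b-1) - c*uca*(a-1)) * ell * (B13*h1*D.B31)
     = - (rinv (d*udb - c*uca) * ((d*udb*(b-1) - c*uca*(a-1)) * (ell * (B12*(b-a))) * D.B11))"
    unfolding k by (simp add: mult.assoc)
  also have "\<dots> = rinv (d*udb - c*uca) * (d*udb - c*uca)" unfolding ell_B12' by (simp only: mult_1_right Mid_c11 mult_minus_right minus_minus)
  also have "\<dots> = 1" using unit_rinv[OF unit_E] by simp
  finally show A: "rinv (d*udb - c*uca) * (d*udb*(b-1) - c*uca*(a-1)) * ell * (B13*h1*D.B31) = 1" .
  show U: "is_unit (B13*h1*D.B31)" by (intro unit_mult unitsB units_h D.unitsB)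
  show "(B13*h1*D.B31) * (rinv (d*udb - c*uca) * (d*udb*(b-1) - c*uca*(a-1)) * ell) = 1"
    using left_inv_unit[OF U A] .
qed
end

lemma rinv_mult: "is_unit x \<Longrightarrow> is_unit y \<Longrightarrow> rinv (x*y) = rinv y * rinv (x::'a::ring_1)"
proof -
  assume ux: "is_unit x" and uy: "is_unit y"
  note X = unit_rinv[OF ux] and Y = unit_rinv[OF uy]
  show ?thesis
  proof (rule rinv_eq)
    have "x*y*(rinv y * rinv x) = x*(y*rinv y)*rinv x" by (simp add: mult.assoc)
    thus "x*y*(rinv y * rinv x) = 1" using X Y by simp
    have "rinv y * rinv x * (x*y) = rinv y*(rinv x*x)*y" by (simp add: mult.assoc)
    thus "rinv y * rinv x * (x*y) = 1" using X Y by simp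
  qed
qed

lemma unit_rinv_unit: "is_unit x \<Longrightarrow> is_unit (rinv (x::'a::ring_1))"
  using unit_rinv unitI by metis

lemma rinv_rinv: "is_unit x \<Longrightarrow> rinv (rinv (x::'a::ring_1)) = x"
  using unit_rinv rinv_eq by metis

lemma rinv_one: "rinv (1::'a::ring_1) = 1"
  by (rule rinv_eq) simp_all

lemma ldiag: "mat3 a 0 0 0 b 0 0 0 c ** mat3 m11 m12 m13 m21 m22 m23 m31 m32 m33
  = mat3 (a*m11) (a*m12) (a*m13) (b*m21) (b*m22) (b*m23) (c*m31) (c*m32) (c*m33)"
  by (simp add: mat3_mult)
lemma rdiag: "mat3 m11 m12 m13 m21 m22 m23 m31 m32 m33 ** mat3 a 0 0 0 b 0 0 0 c
  = mat3 (m11*a) (m12*b) (m13*c) (m21*a) (m22*b) (m23*c) (m31*a) (m32*b) (m33*c)"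
  by (simp add: mat3_mult)

lemma minv_unique: "M ** N = mat 1 \<Longrightarrow> N ** M = mat 1 \<Longrightarrow> minvertible M \<and> minv M = (N::'a::ring_1^3^3)"
proof -
  assume h: "M ** N = mat 1" "N ** M = mat 1"
  have "\<And>N'. M ** N' = mat 1 \<and> N' ** M = mat 1 \<Longrightarrow> N' = N"
  proof -
    fix N' assume "M ** N' = mat 1 \<and> N' ** M = mat 1"
    hence "N' = N' ** (M ** N)" "N' ** M = mat 1" using h by simp_all
    thus "N' = N" by (simp add: matrix_mul_assoc)
  qed
  thus ?thesis using h unfolding minvertible_def minv_def by (metis (mono_tags, lifting) the_equality)
qed


definition diag3 :: "'a::ring_1 \<Rightarrow> 'a \<Rightarrow> 'a \<Rightarrow> 'a^3^3" where
  "diag3 a b c = mat3 a 0 0 0 b 0 0 0 c"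

lemma diag3_mult: "diag3 a b c ** diag3 a' b' c' = diag3 (a*a') (b*b') (c*c')"
  unfolding diag3_def by (simp add: mat3_mult)

lemma diag3_inv: "is_unit a \<Longrightarrow> is_unit b \<Longrightarrow> is_unit c \<Longrightarrow>
  diag3 a b c ** diag3 (rinv a) (rinv b) (rinv c) = mat 1 \<and> diag3 (rinv a) (rinv b) (rinv c) ** diag3 a b c = mat 1"
  unfolding diag3_mult unfolding diag3_def mat1_3 mat3_eq_iff
  using unit_rinv[of a] unit_rinv[of b] unit_rinv[of c] by simp

lemma units_from: "(x::'a::ring_1) * y = z * w \<Longrightarrow> is_unit y \<Longrightarrow> is_unit z \<Longrightarrow> is_unit w \<Longrightarrow> is_unit x"
proof -
  assume h: "x*y = z*w" and u: "is_unit y" "is_unit z" "is_unit w"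
  have "x = x*(y*rinv y)" using unit_rinv[OF u(1)] by simp
  also have "\<dots> = z*w*rinv y" using h by (simp add: mult.assoc[symmetric])
  finally show ?thesis using u by (metis unit_mult unit_rinv_unit)
qed

lemma units_from2: "(y::'a::ring_1) * x = z \<Longrightarrow> is_unit y \<Longrightarrow> is_unit z \<Longrightarrow> is_unit x"
proof -
  assume h: "y*x = z" and u: "is_unit y" "is_unit z"
  have "x = (rinv y*y)*x" using unit_rinv[OF u(1)] by simp
  also have "\<dots> = rinv y * z" using h by (simp add: mult.assoc)
  finally show ?thesis using u by (metis unit_mult unit_rinv_unit)
qed

locale asm =
  fixes x11 x12 x13 x21 x22 x23 x31 x32 x33 y11 y12 y13 y21 y22 y23 y31 y32 y33
    k1 k2 k3 l1 l2 l3 r1 r2 r3 w1 w2 w3 :: "'a::ring_1"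
  assumes ux: "is_unit x11" "is_unit x12" "is_unit x13" "is_unit x21" "is_unit x22" "is_unit x23" "is_unit x31" "is_unit x32" "is_unit x33"
  and uy: "is_unit y11" "is_unit y12" "is_unit y13" "is_unit y21" "is_unit y22" "is_unit y23" "is_unit y31" "is_unit y32" "is_unit y33"
  and uk: "is_unit k1" "is_unit k2" "is_unit k3" and ul: "is_unit l1" "is_unit l2" "is_unit l3"
  and ur3: "is_unit r3" and uw3: "is_unit w3"
  and H1: "J2 (mat3 x11 x12 x13 x21 x22 x23 x31 x32 x33) ** (diag3 k1 k2 k3 ** J2 (mat3 y11 y12 y13 y21 y22 y23 y31 y32 y33)) = diag3 r1 r2 r3"
  and H2: "J2 (mat3 y11 y12 y13 y21 y22 y23 y31 y32 y33) ** (diag3 l1 l2 l3 ** J2 (mat3 x11 x12 x13 x21 x22 x23 x31 x32 x33)) = diag3 w1 w2 w3"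
begin

lemma units_rw: "is_unit r1" "is_unit r2" "is_unit w1" "is_unit w2"
proof -
  have "diag3 r1 r2 r3 ** (diag3 l1 l2 l3 ** J2 (mat3 x11 x12 x13 x21 x22 x23 x31 x32 x33)) = J2 (mat3 x11 x12 x13 x21 x22 x23 x31 x32 x33) ** (diag3 k1 k2 k3 ** diag3 w1 w2 w3)"
    unfolding H1[symmetric] H2[symmetric] by (simp add: matrix_mul_assoc)
  hence e: "r1*(l1*rinv x31) = rinv x31*(k3*w3)" "r2*(l2*rinv x32) = rinv x32*(k3*w3)"
      "r3*(l3*rinv x13) = rinv x13*(k1*w1)" "r3*(l3*rinv x23) = rinv x23*(k2*w2)"
    unfolding J2_mat3 diag3_def mat3_mult mat3_eq_iff by simp_all
  show "is_unit r1" by (rule units_from[OF e(1)]) (intro unit_mult unit_rinv_unit ux uk ul uw3)+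
  show "is_unit r2" by (rule units_from[OF e(2)]) (intro unit_mult unit_rinv_unit ux uk ul uw3)+
  show "is_unit w1" by (rule units_from2[of "rinv x13 * k1" w1 "r3*(l3*rinv x13)"])
    (use e(3) in \<open>simp add: mult.assoc\<close>, (intro unit_mult unit_rinv_unit ux uk ul ur3)+)
  show "is_unit w2" by (rule units_from2[of "rinv x23 * k2" w2 "r3*(l3*rinv x23)"])
    (use e(4) in \<open>simp add: mult.assoc\<close>, (intro unit_mult unit_rinv_unit ux uk ul ur3)+)
qed

end

lemma LL_mat3: "LambdaL (mat3 x11 x12 x13 x21 x22 x23 x31 x32 x33) = mat3
  (x11*rinv x11*x11*rinv x11) (x11*rinv x11*x12*rinv x12) (x11*rinv x11*x13*rinv x13)
  (x11*rinv x21*x21*rinv x11) (x11*rinv x21*x22*rinv x12) (x11*rinv x21*x23*rinv x13)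
  (x11*rinv x31*x31*rinv x11) (x11*rinv x31*x32*rinv x12) (x11*rinv x31*x33*rinv x13)"
  unfolding LambdaL_def by (subst mat3_eq) (simp add: mat3_nth)

lemma LR_mat3: "LambdaR (mat3 x11 x12 x13 x21 x22 x23 x31 x32 x33) = mat3
  (rinv x11*x11*rinv x11*x11) (rinv x11*x12*rinv x12*x11) (rinv x11*x13*rinv x13*x11)
  (rinv x21*x21*rinv x11*x11) (rinv x21*x22*rinv x12*x11) (rinv x21*x23*rinv x13*x11)
  (rinv x31*x31*rinv x11*x11) (rinv x31*x32*rinv x12*x11) (rinv x31*x33*rinv x13*x11)"
  unfolding LambdaR_def by (subst mat3_eq) (simp add: mat3_nth)

lemma conj_mat3: "conj_mat w (mat3 x11 x12 x13 x21 x22 x23 x31 x32 x33) = mat3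
  (rinv w*x11*w) (rinv w*x12*w) (rinv w*x13*w) (rinv w*x21*w) (rinv w*x22*w) (rinv w*x23*w)
  (rinv w*x31*w) (rinv w*x32*w) (rinv w*x33*w)"
  unfolding conj_mat_def by (subst mat3_eq) (simp add: mat3_nth)

lemma rinv4: "is_unit a \<Longrightarrow> is_unit b \<Longrightarrow> is_unit c \<Longrightarrow> is_unit d \<Longrightarrow>
  rinv (a * rinv b * c * rinv d) = d * rinv c * b * rinv (a::'a::ring_1)"
  by (simp add: rinv_mult unit_mult unit_rinv_unit rinv_rinv mult.assoc)

lemma ucanc: "is_unit x \<Longrightarrow> x*(rinv x*z) = z \<and> rinv x*(x*z) = (z::'a::ring_1)"
  using unit_rinv by (metis mult.assoc mult_1_left)

lemma crs: "is_unit g1 \<Longrightarrow> is_unit gk \<Longrightarrow> is_unit f \<Longrightarrow> is_unit f1 \<Longrightarrow> is_unit p2 \<Longrightarrow> is_unit p4 \<Longrightarrow>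
  (g1*p1*f) * rinv (gk*p2*f) * (gk*p3*f1) * rinv (g1*p4*f1) = g1*(p1*rinv p2*p3*rinv p4)*rinv (g1::'a::ring_1)"
  by (simp add: rinv_mult unit_mult mult.assoc ucanc)


lemma canc_r: "A ** B = mat 1 \<Longrightarrow> X ** A ** B = (X::'a::ring_1^3^3)"
  by (metis matrix_mul_assoc matrix_mul_rid)

context asm begin

abbreviation "XX \<equiv> mat3 x11 x12 x13 x21 x22 x23 x31 x32 x33"
abbreviation "YY \<equiv> mat3 y11 y12 y13 y21 y22 y23 y31 y32 y33"
abbreviation "VV \<equiv> diag3 k1 k2 k3 ** J2 YY ** diag3 (rinv r1) (rinv r2) (rinv r3)"

lemma Qinv: "J2 XX ** VV = mat 1" "VV ** J2 XX = mat 1"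
proof -
  note ur = units_rw
  have R: "diag3 r1 r2 r3 ** diag3 (rinv r1) (rinv r2) (rinv r3) = mat 1" using diag3_inv[OF ur(1,2) ur3] by simp
  have W: "diag3 (rinv w1) (rinv w2) (rinv w3) ** diag3 w1 w2 w3 = mat 1" using diag3_inv[OF ur(3,4) uw3] by simp
  have "J2 XX ** VV = (J2 XX ** (diag3 k1 k2 k3 ** J2 YY)) ** diag3 (rinv r1) (rinv r2) (rinv r3)"
    by (simp add: matrix_mul_assoc)
  thus A: "J2 XX ** VV = mat 1" unfolding H1 R .
  define L where "L = diag3 (rinv w1) (rinv w2) (rinv w3) ** (J2 YY ** diag3 l1 l2 l3)"
  have "L ** J2 XX = diag3 (rinv w1) (rinv w2) (rinv w3) ** (J2 YY ** (diag3 l1 l2 l3 ** J2 XX))"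
    unfolding L_def by (simp add: matrix_mul_assoc)
  hence B: "L ** J2 XX = mat 1" unfolding H2 W .
  have "VV = (L ** J2 XX) ** VV" unfolding B by simp
  also have "\<dots> = L ** (J2 XX ** VV)" by (simp add: matrix_mul_assoc)
  also have "\<dots> = L" unfolding A by simp
  finally show "VV ** J2 XX = mat 1" using B by simp
qed

lemma T_eq: "J2 (LambdaL XX) = diag3 x11 x12 x13 ** J2 XX ** diag3 (x11*rinv x11) (x21*rinv x11) (x31*rinv x11)"
  unfolding LL_mat3 J2_mat3 diag3_def mat3_mult
  apply (simp only: rinv4 ux)
  apply (simp add: mult.assoc)
  done


abbreviation "DL \<equiv> diag3 x11 x12 x13"
abbreviation "DLi \<equiv> diag3 (rinv x11) (rinv x12) (rinv x13)"
abbreviation "DR \<equiv> diag3 (x11*rinv x11) (x21*rinv x11) (x31*rinv x11)"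
abbreviation "DRi \<equiv> diag3 (rinv (x11*rinv x11)) (rinv (x21*rinv x11)) (rinv (x31*rinv x11))"
abbreviation "WW \<equiv> DRi ** VV ** DLi"

lemma Tinv: "J2 (LambdaL XX) ** WW = mat 1" "WW ** J2 (LambdaL XX) = mat 1"
proof -
  have uDL: "DL ** DLi = mat 1" "DLi ** DL = mat 1" using diag3_inv[OF ux(1,2,3)] by simp_all
  have udr: "is_unit (x11*rinv x11)" "is_unit (x21*rinv x11)" "is_unit (x31*rinv x11)"
    by (intro unit_mult unit_rinv_unit ux)+
  have uDR: "DR ** DRi = mat 1" "DRi ** DR = mat 1" using diag3_inv[OF udr] by simp_all
  have "J2 (LambdaL XX) ** WW = DL ** (J2 XX ** ((DR ** DRi) ** (VV ** DLi)))"
    unfolding T_eq by (simp add: matrix_mul_assoc)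
  also have "\<dots> = DL ** ((J2 XX ** VV) ** DLi)" unfolding uDR by (simp add: matrix_mul_assoc)
  also have "\<dots> = mat 1" unfolding Qinv by (simp add: uDL)
  finally show "J2 (LambdaL XX) ** WW = mat 1" .
  have "WW ** J2 (LambdaL XX) = DRi ** ((VV ** ((DLi ** DL) ** J2 XX)) ** DR)"
    unfolding T_eq by (simp add: matrix_mul_assoc)
  also have "\<dots> = DRi ** ((VV ** J2 XX) ** DR)" unfolding uDL by (simp add: matrix_mul_assoc)
  also have "\<dots> = mat 1" unfolding Qinv by (simp add: uDR)
  finally show "WW ** J2 (LambdaL XX) = mat 1" .
qed


lemma WW_eq: "WW = mat3 ((rinv (x11*rinv x11)*k1)*rinv y11*(rinv r1*rinv x11)) ((rinv (x11*rinv x11)*k1)*rinv y21*(rinv r2*rinv x12)) ((rinv (x11*rinv x11)*k1)*rinv y31*(rinv r3*rinv x13)) ((rinv (x21*rinv x11)*k2)*rinv y12*(rinv r1*rinv x11)) ((rinv (x21*rinv x11)*k2)*rinv y22*(rinv r2*rinv x12)) ((rinv (x21*rinv x11)*k2)*rinv y32*(rinv r3*rinv x13)) ((rinv (x31*rinv x11)*k3)*rinv y13*(rinv r1*rinv x11)) ((rinv (x31*rinv x11)*k3)*rinv y23*(rinv r2*rinv x12)) ((rinv (x31*rinv x11)*k3)*rinv y33*(rinv r3*rinv x13))"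
  unfolding diag3_def J2_mat3 mat3_mult by (simp add: mult.assoc)

lemma uG: "is_unit (rinv (x11*rinv x11)*k1)" "is_unit (rinv (x21*rinv x11)*k2)" "is_unit (rinv (x31*rinv x11)*k3)" "is_unit (rinv r1*rinv x11)" "is_unit (rinv r2*rinv x12)" "is_unit (rinv r3*rinv x13)"
  by (intro unit_mult unit_rinv_unit ux uk ur3 units_rw)+

lemma Tfinal:
  "minvertible (J2 (LambdaL XX))"
  "all_units (minv (J2 (LambdaL XX)))"
  "hat (J2 (LambdaL XX))"
  "all_units (J2 (LambdaL XX))"
  "J2 (LambdaL (minv (J2 (LambdaL XX)))) = conj_mat (rinv k1) (LambdaR YY)"
proof -
  note M = minv_unique[OF Tinv]
  show "minvertible (J2 (LambdaL XX))" using M by simp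
  have mW: "minv (J2 (LambdaL XX)) = WW" using M by simp
  note U = uG unit_mult unit_rinv_unit uy
  show "all_units (minv (J2 (LambdaL XX)))" unfolding mW WW_eq all_units_def forall_3
    by (simp add: mat3_nth U)
  have T: "J2 (LambdaL XX) = mat3 (x11*rinv x11*x11*rinv x11) (x11*rinv x21*x21*rinv x11) (x11*rinv x31*x31*rinv x11)
     (x12*rinv x12*x11*rinv x11) (x12*rinv x22*x21*rinv x11) (x12*rinv x32*x31*rinv x11)
     (x13*rinv x13*x11*rinv x11) (x13*rinv x23*x21*rinv x11) (x13*rinv x33*x31*rinv x11)"
    unfolding LL_mat3 J2_mat3 by (simp only: rinv4 ux)
  have c: "\<And>x y. is_unit x \<Longrightarrow> is_unit y \<Longrightarrow> x*rinv x*y*rinv y = 1"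
     "\<And>x y. is_unit x \<Longrightarrow> is_unit y \<Longrightarrow> y*rinv x*x*rinv y = 1"
    by (simp_all add: mult.assoc ucanc unit_rinv)
  show "hat (J2 (LambdaL XX))" unfolding T hat_def forall_3 by (simp add: mat3_nth c ux unit_rinv)
  show "all_units (J2 (LambdaL XX))" unfolding T all_units_def forall_3
    by (simp add: mat3_nth unit_mult unit_rinv_unit ux)
  have g1: "rinv (x11*rinv x11)*k1 = k1" by (simp add: unit_rinv[OF ux(1)] rinv_one)
  show "J2 (LambdaL (minv (J2 (LambdaL XX)))) = conj_mat (rinv k1) (LambdaR YY)"
    unfolding mW unfolding WW_eq unfolding LL_mat3 J2_mat3 LR_mat3 conj_mat3
    apply (simp only: rinv4 U)
    apply (simp only: crs U)
    apply (simp only: g1 rinv_rinv uk uy)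
    done
qed

end

context alg begin
lemma dd_eqs: "-((-(xa*a))*ai) = xa" "-((-(xb*b))*bi) = xb" "-((-(xc*c))*ci) = xc" "-((-(xd*d))*di) = xd"
  "-(ai*(-(a*uba*b))*bi) = uba" "-(ai*(-(a*uca*c))*ci) = uca" "-(bi*(-(b*udb*d))*di) = udb"
  "-(ci*(-(c*udc*d))*di) = udc" "-(di*(-(d*ysg*c*ai*b))*bi*a*ci) = ysg"
  by (simp_all add: mult.assoc sva(1,3) svb(1,3) svc(1,3) svd(1,3) sva(4) svb(4) svc(4) svd(4))

lemma alg_dd: "alg a b c d ai bi ci di (-((-(xa*a))*ai)) (-((-(xb*b))*bi)) (-((-(xc*c))*ci)) (-((-(xd*d))*di))
  (-(ai*(-(a*uba*b))*bi)) (-(ai*(-(a*uca*c))*ci)) (-(bi*(-(b*udb*d))*di)) (-(ci*(-(c*udc*d))*di))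
  (-(di*(-(d*ysg*c*ai*b))*bi*a*ci)) t tp"
  unfolding dd_eqs by (rule alg_axioms)

lemma alg2_dual: "alg2 ai ci bi di a c b d (-(xa*a)) (-(xc*c)) (-(xb*b)) (-(xd*d)) (-(a*uca*c)) (-(a*uba*b))
   (-(c*udc*d)) (-(b*udb*d)) (-(d*ysg*c*ai*b)) tp t"
  unfolding alg2_def using dual alg_dd by simp
end

context alg2 begin

lemma asm_inst: "\<exists>u1 u2. asm B11 B12 B13 B21 S11 S12 B31 S21 t D.B11 D.B12 D.B13 D.B21 D.S11 D.S12 D.B31 D.S21 tp
  (B13*h1*D.B31) (S12*h2*D.S21) (t*h3*tp) (D.B13*D.h1*B31) (D.S12*D.h2*S21) (tp*D.h3*t)
  rho1 rho2 ((d-c)*ell*b*xb*Dp) u1 u2 ((di-bi)*D.ell*ci*(-(xc*c))*D.Dp)"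
proof -
  note G = alg2.G7[OF alg.alg2_dual[OF alg_axioms], unfolded dd_eqs]
  obtain u1 u2 where G': "J2 (mat3 D.B11 D.B12 D.B13 D.B21 D.S11 D.S12 D.B31 D.S21 tp) **
    (mat3 (D.B13*D.h1*B31) 0 0 0 (D.S12*D.h2*S21) 0 0 0 (tp*D.h3*t) ** J2 (mat3 B11 B12 B13 B21 S11 S12 B31 S21 t)) =
    mat3 u1 0 0 0 u2 0 0 0 ((di-bi)*D.ell*ci*(-(xc*c))*D.Dp)" using G by blast
  have "asm B11 B12 B13 B21 S11 S12 B31 S21 t D.B11 D.B12 D.B13 D.B21 D.S11 D.S12 D.B31 D.S21 tp
  (B13*h1*D.B31) (S12*h2*D.S21) (t*h3*tp) (D.B13*D.h1*B31) (D.S12*D.h2*S21) (tp*D.h3*t)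
  rho1 rho2 ((d-c)*ell*b*xb*Dp) u1 u2 ((di-bi)*D.ell*ci*(-(xc*c))*D.Dp)"
  proof (unfold_locales)
    show "J2 (mat3 B11 B12 B13 B21 S11 S12 B31 S21 t) **
      (diag3 (B13*h1*D.B31) (S12*h2*D.S21) (t*h3*tp) ** J2 (mat3 D.B11 D.B12 D.B13 D.B21 D.S11 D.S12 D.B31 D.S21 tp)) =
      diag3 rho1 rho2 ((d-c)*ell*b*xb*Dp)" using G7 unfolding diag3_def .
    show "J2 (mat3 D.B11 D.B12 D.B13 D.B21 D.S11 D.S12 D.B31 D.S21 tp) **
      (diag3 (D.B13*D.h1*B31) (D.S12*D.h2*S21) (tp*D.h3*t) ** J2 (mat3 B11 B12 B13 B21 S11 S12 B31 S21 t)) =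
      diag3 u1 u2 ((di-bi)*D.ell*ci*(-(xc*c))*D.Dp)" using G' unfolding diag3_def .
  qed (intro unit_mult unit_uminus unitsB D.unitsB units_h D.units_h unit_ell D.unit_ell units0 D.units0)+
  thus ?thesis by blast
qed

end

lemma rinv_one': "rinv (1::'a::ring_1) = 1" by (rule rinv_eq) simp_all

context alg2 begin

lemma main:
  "dom_Phi (mat3 1 1 1 1 a b 1 c d) \<and> dom_Phi (Phi (mat3 1 1 1 1 a b 1 c d)) \<and> dom_Jinv (mat3 1 1 1 1 a b 1 c d)
   \<and> is_unit (d*udb - c*uca)
   \<and> is_unit (rinv (d*udb - c*uca) * (d*udb*(b-1) - c*uca*(a-1)) * (udc*(c-1) - uba*(a-1)))
   \<and> Phi (Phi (mat3 1 1 1 1 a b 1 c d)) = conj_mat (rinv (d*udb - c*uca) * (d*udb*(b-1) - c*uca*(a-1)) * (udc*(c-1) - uba*(a-1))) (Phi_inv (mat3 1 1 1 1 a b 1 c d))"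
proof -
  let ?A = "mat3 1 1 1 1 a b 1 c d"
  let ?B = "mat3 B11 B12 B13 B21 S11 S12 B31 S21 t"
  let ?C = "mat3 D.B11 D.B12 D.B13 D.B21 D.S11 D.S12 D.B31 D.S21 tp"
  have AB: "?A ** ?B = mat 1" "?B ** ?A = mat 1"
    unfolding mat3_mult mat1_3 mat3_eq_iff using Brel by simp_all
  note mA = minv_unique[OF AB]
  have ri: "rinv a = ai" "rinv b = bi" "rinv c = ci" "rinv d = di"
    using rinv_eq a1 a2 b1 b2 c1 c2 d1 d2 by blast+
  have J2A: "J2 ?A = mat3 1 1 1 1 ai ci 1 bi di" unfolding J2_mat3 ri rinv_one' ..
  have AC: "J2 ?A ** ?C = mat 1" "?C ** J2 ?A = mat 1"
    unfolding J2A mat3_mult mat1_3 mat3_eq_iff using D.Brel by simp_all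
  note mC = minv_unique[OF AC]
  obtain u1 u2 where AS: "asm B11 B12 B13 B21 S11 S12 B31 S21 t D.B11 D.B12 D.B13 D.B21 D.S11 D.S12 D.B31 D.S21 tp
  (B13*h1*D.B31) (S12*h2*D.S21) (t*h3*tp) (D.B13*D.h1*B31) (D.S12*D.h2*S21) (tp*D.h3*t)
  rho1 rho2 ((d-c)*ell*b*xb*Dp) u1 u2 ((di-bi)*D.ell*ci*(-(xc*c))*D.Dp)" using asm_inst by blast
  note TF = asm.Tfinal[OF AS]
  have PhiA: "Phi ?A = J2 (LambdaL ?B)" unfolding Phi_def using mA by simp
  have Pinv: "Phi_inv ?A = LambdaR ?C" unfolding Phi_inv_def Jinv_def J1_def using mC by simp
  have om: "rinv (B13*h1*D.B31) = rinv (d*udb - c*uca) * (d*udb*(b-1) - c*uca*(a-1)) * (udc*(c-1) - uba*(a-1))"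
    using omega(1,2) unfolding ell_def by (intro rinv_eq) simp_all
  have uom: "is_unit (rinv (d*udb - c*uca) * (d*udb*(b-1) - c*uca*(a-1)) * (udc*(c-1) - uba*(a-1)))"
    using omega(1,2) unfolding ell_def by (intro unitI) simp_all
  have uA: "all_units ?A" "hat ?A" unfolding all_units_def hat_def forall_3 mat3_nth
    using unit_one units0 by simp_all
  show ?thesis
  proof (intro conjI)
    show "dom_Phi ?A" unfolding dom_Phi_def dom_J_def J1_def using mA uA unitsB
      unfolding all_units_def forall_3 by (simp add: mat3_nth)
    show "dom_Phi (Phi ?A)" unfolding dom_Phi_def dom_J_def J1_def PhiA using TF by simp
    show "dom_Jinv ?A" unfolding dom_Jinv_def using mC uA by simp
    show "is_unit (d*udb - c*uca)" by (rule unit_E)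
    show "is_unit (rinv (d*udb - c*uca) * (d*udb*(b-1) - c*uca*(a-1)) * (udc*(c-1) - uba*(a-1)))" by (rule uom)
    show "Phi (Phi ?A) = conj_mat (rinv (d*udb - c*uca) * (d*udb*(b-1) - c*uca*(a-1)) * (udc*(c-1) - uba*(a-1))) (Phi_inv ?A)"
      unfolding Pinv om[symmetric] PhiA unfolding Phi_def using TF(5) by simp
  qed
qed

end

lemma sub1: "sub_invertible M {j} {k} \<Longrightarrow> is_unit (M$j$k)"
  unfolding sub_invertible_def is_unit_def by auto

lemma schur2:
  fixes ma mb mc md na nb nc nd :: "'a::ring_1"
  assumes "ma*na + mb*nc = 1" "ma*nb + mb*nd = 0" "mc*na + md*nc = 0" "mc*nb + md*nd = 1"
    "na*ma + nb*mc = 1" "na*mb + nb*md = 0" "nc*ma + nd*mc = 0" "nc*mb + nd*md = 1" and u: "is_unit ma"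
  shows "is_unit (md - mc*rinv ma*mb)"
proof (rule unitI)
  note U = unit_rinv[OF u]
  have F: "nb = -(rinv ma*mb*nd)"
  proof -
    have "nb = rinv ma*(ma*nb)" using U by (simp add: mult.assoc[symmetric])
    also have "ma*nb = -(mb*nd)" using assms(2) by (simp add: eq_neg_iff_add_eq_0)
    finally show ?thesis by (simp add: mult.assoc)
  qed
  have G: "nc = -(nd*mc*rinv ma)"
  proof -
    have "nc = (nc*ma)*rinv ma" using U by (simp add: mult.assoc)
    also have "nc*ma = -(nd*mc)" using assms(7) by (simp add: eq_neg_iff_add_eq_0)
    finally show ?thesis by (simp add: mult.assoc)
  qed
  show "(md - mc*rinv ma*mb)*nd = 1" using assms(4) unfolding F by (simp add: algebra_simps)
  show "nd*(md - mc*rinv ma*mb) = 1" using assms(8) unfolding G by (simp add: algebra_simps)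
qed

lemma sub2: "sub_invertible M {i1,i2} {k1,k2} \<Longrightarrow> i1 \<noteq> i2 \<Longrightarrow> k1 \<noteq> k2 \<Longrightarrow> is_unit (M$i1$k1)
  \<Longrightarrow> is_unit (M$i2$k2 - M$i2$k1 * rinv (M$i1$k1) * M$i1$k2)"
  unfolding sub_invertible_def
proof (elim exE conjE)
  fix N :: "'a::ring_1^3^3"
  assume h1: "\<forall>i\<in>{i1,i2}. \<forall>i'\<in>{i1,i2}. (\<Sum>k\<in>{k1,k2}. M$i$k * N$k$i') = (if i = i' then 1 else 0)"
    and h2: "\<forall>k\<in>{k1,k2}. \<forall>k'\<in>{k1,k2}. (\<Sum>i\<in>{i1,i2}. N$k$i * M$i$k') = (if k = k' then 1 else 0)"
    and d: "i1 \<noteq> i2" "k1 \<noteq> k2" and u: "is_unit (M$i1$k1)"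
  show ?thesis
    by (rule schur2[where na="N$k1$i1" and nb="N$k1$i2" and nc="N$k2$i1" and nd="N$k2$i2"])
      (use h1 h2 d u in auto)
qed

lemma schur3:
  fixes a b c d :: "'a::ring_1"
  assumes h: "mat3 1 1 1 1 a b 1 c d ** N = mat 1" "N ** mat3 1 1 1 1 a b 1 c d = mat 1" and u: "is_unit (a-1)"
  shows "is_unit ((d-1) - (c-1)*rinv (a-1)*(b-1))"
proof -
  obtain n11 n12 n13 n21 n22 n23 n31 n32 n33 where N: "N = mat3 n11 n12 n13 n21 n22 n23 n31 n32 n33"
    using mat3_eq by blast
  from h have e: "n13 + n23 + n33 = 0" "n13 + a*n23 + b*n33 = 0" "n13 + c*n23 + d*n33 = 1"
    "n31 + n32 + n33 = 0" "n31 + n32*a + n33*c = 0" "n31 + n32*b + n33*d = 1"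
    "n12 + n22 + n32 = 0" "n12 + a*n22 + b*n32 = 1" "n12 + c*n22 + d*n32 = 0"
    "n21 + n22 + n23 = 0" "n21 + n22*a + n23*c = 1" "n21 + n22*b + n23*d = 0"
    unfolding N mat3_mult mat1_3 mat3_eq_iff by simp_all
  have f1: "(a-1)*n22 + (b-1)*n32 = 1"
  proof -
    have "(a-1)*n22 + (b-1)*n32 = (n12 + a*n22 + b*n32) - (n12 + n22 + n32)" by (simp add: algebra_simps)
    thus ?thesis using e(8) e(7) by simp
  qed
  have f2: "(a-1)*n23 + (b-1)*n33 = 0"
  proof -
    have "(a-1)*n23 + (b-1)*n33 = (n13 + a*n23 + b*n33) - (n13 + n23 + n33)" by (simp add: algebra_simps)
    thus ?thesis using e(2) e(1) by simp
  qed
  have f3: "(c-1)*n22 + (d-1)*n32 = 0"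
  proof -
    have "(c-1)*n22 + (d-1)*n32 = (n12 + c*n22 + d*n32) - (n12 + n22 + n32)" by (simp add: algebra_simps)
    thus ?thesis using e(9) e(7) by simp
  qed
  have f4: "(c-1)*n23 + (d-1)*n33 = 1"
  proof -
    have "(c-1)*n23 + (d-1)*n33 = (n13 + c*n23 + d*n33) - (n13 + n23 + n33)" by (simp add: algebra_simps)
    thus ?thesis using e(3) e(1) by simp
  qed
  have f5: "n22*(a-1) + n23*(c-1) = 1"
  proof -
    have "n22*(a-1) + n23*(c-1) = (n21 + n22*a + n23*c) - (n21 + n22 + n23)" by (simp add: algebra_simps)
    thus ?thesis using e(11) e(10) by simp
  qed
  have f6: "n22*(b-1) + n23*(d-1) = 0"
  proof -
    have "n22*(b-1) + n23*(d-1) = (n21 + n22*b + n23*d) - (n21 + n22 + n23)" by (simp add: algebra_simps)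
    thus ?thesis using e(12) e(10) by simp
  qed
  have f7: "n32*(a-1) + n33*(c-1) = 0"
  proof -
    have "n32*(a-1) + n33*(c-1) = (n31 + n32*a + n33*c) - (n31 + n32 + n33)" by (simp add: algebra_simps)
    thus ?thesis using e(5) e(4) by simp
  qed
  have f8: "n32*(b-1) + n33*(d-1) = 1"
  proof -
    have "n32*(b-1) + n33*(d-1) = (n31 + n32*b + n33*d) - (n31 + n32 + n33)" by (simp add: algebra_simps)
    thus ?thesis using e(6) e(4) by simp
  qed
  show ?thesis
    by (rule schur2[where na=n22 and nb="n23" and nc=n32 and nd=n33 and ma="a-1" and mb="b-1" and mc="c-1" and md="d-1"])
      (fact f1 f2 f3 f4 f5 f6 f7 f8 u)+
qed


theorem theorem4:
  fixes a b c d :: "'a::ring_1"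
  defines "A \<equiv> mat3 1 1 1 1 a b 1 c d"
  defines "\<omega> \<equiv> rinv (d * rinv (d - b) - c * rinv (c - a))
              * (d * rinv (d - b) * (b - 1) - c * rinv (c - a) * (a - 1))
              * (rinv (d - c) * (c - 1) - rinv (b - a) * (a - 1))"
  assumes "in_hatS A"
  shows "dom_Phi A \<and> dom_Phi (Phi A) \<and> dom_Jinv A
         \<and> is_unit (d - b) \<and> is_unit (c - a) \<and> is_unit (d - c) \<and> is_unit (b - a)
         \<and> is_unit (d * rinv (d - b) - c * rinv (c - a)) \<and> is_unit \<omega>
         \<and> Phi (Phi A) = conj_mat \<omega> (Phi_inv A)"
proof -
  have S: "\<And>I K. I \<noteq> {} \<Longrightarrow> card I = card K \<Longrightarrow> sub_invertible A I K" and J2i: "minvertible (J2 A)"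
    using assms(3) unfolding in_hatS_def in_S_def by auto
  have r1: "rinv (1::'a) = 1" by (rule rinv_one')
  have s1: "\<And>j k. sub_invertible A {j} {k}" by (rule S) auto
  have ua: "is_unit a" "is_unit b" "is_unit c" "is_unit d"
    using sub1[OF s1[of 2 2]] sub1[OF s1[of 2 3]] sub1[OF s1[of 3 2]] sub1[OF s1[of 3 3]]
    unfolding A_def mat3_nth by simp_all
  have s2: "\<And>i1 i2 k1 k2. i1 \<noteq> i2 \<Longrightarrow> k1 \<noteq> k2 \<Longrightarrow> sub_invertible A {i1,i2} {k1,k2}"
    by (rule S) auto
  have u2: "\<And>i1 i2 k1 k2. i1 \<noteq> i2 \<Longrightarrow> k1 \<noteq> k2 \<Longrightarrow> is_unit (A$i1$k1) \<Longrightarrow>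
     is_unit (A$i2$k2 - A$i2$k1 * rinv (A$i1$k1) * A$i1$k2)"
    using sub2 s2 by blast
  have one: "is_unit (1::'a)" by (rule unit_one)
  have ub: "is_unit (a-1)" "is_unit (b-1)" "is_unit (c-1)" "is_unit (d-1)"
     "is_unit (b-a)" "is_unit (c-a)" "is_unit (d-b)" "is_unit (d-c)" "is_unit (d - c*rinv a*b)"
    using u2[of 1 2 1 2] u2[of 1 2 1 3] u2[of 1 3 1 2] u2[of 1 3 1 3] u2[of 1 2 2 3] u2[of 2 3 1 2]
      u2[of 2 3 1 3] u2[of 1 3 2 3] u2[of 2 3 2 3] ua one
    unfolding A_def mat3_nth r1 by simp_all
  obtain N where AN: "A ** N = mat 1" "N ** A = mat 1"
  proof -
    have "sub_invertible A UNIV UNIV" by (rule S) auto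
    then obtain N where "\<forall>i i'. (\<Sum>k\<in>UNIV. A$i$k * N$k$i') = (if i = i' then 1 else 0)"
      "\<forall>k k'. (\<Sum>i\<in>UNIV. N$k$i * A$i$k') = (if k = k' then 1 else 0)"
      unfolding sub_invertible_def by blast
    hence "A ** N = mat 1" "N ** A = mat 1" unfolding matrix_matrix_mult_def mat_def vec_eq_iff by simp_all
    thus ?thesis using that by blast
  qed
  have uD: "is_unit ((d-1) - (c-1)*rinv (a-1)*(b-1))" by (rule schur3[OF AN[unfolded A_def] ub(1)])
  have J2A: "J2 A = mat3 1 1 1 1 (rinv a) (rinv c) 1 (rinv b) (rinv d)" unfolding A_def J2_mat3 r1 ..
  obtain M where JM: "J2 A ** M = mat 1" "M ** J2 A = mat 1" using J2i unfolding minvertible_def by blast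
  note Ua = unit_rinv[OF ua(1)] and Ux = unit_rinv[OF ub(1)]
  note SV = sv_gen[of a "rinv a" "rinv (a-1)", OF conjunct1[OF Ua] conjunct2[OF Ua] conjunct1[OF Ux] conjunct2[OF Ux]]
  have xf: "(rinv a - 1)*(-(rinv (a-1)*a)) = 1" "(-(rinv (a-1)*a))*(rinv a - 1) = 1"
    by (simp_all add: algebra_simps SV)
  have xi: "rinv (rinv a - 1) = -(rinv (a-1)*a)" by (rule rinv_eq[OF xf])
  have uai: "is_unit (rinv a - 1)" by (rule unitI[OF xf])
  have uDp0: "is_unit ((rinv d - 1) - (rinv b - 1)*rinv (rinv a - 1)*(rinv c - 1))"
    by (rule schur3[OF JM[unfolded J2A] uai])
  have eq: "(rinv d - 1) - (rinv b - 1)*rinv (rinv a - 1)*(rinv c - 1) = (rinv d - 1) + (rinv b - 1)*rinv (a-1)*a*(rinv c - 1)"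
    unfolding xi by (simp add: mult.assoc)
  have uDp: "is_unit ((rinv d - 1) + (rinv b - 1)*rinv (a-1)*a*(rinv c - 1))" using uDp0 unfolding eq .
  note R = unit_rinv[OF ua(1)] unit_rinv[OF ua(2)] unit_rinv[OF ua(3)] unit_rinv[OF ua(4)]
    unit_rinv[OF ub(1)] unit_rinv[OF ub(2)] unit_rinv[OF ub(3)] unit_rinv[OF ub(4)]
    unit_rinv[OF ub(5)] unit_rinv[OF ub(6)] unit_rinv[OF ub(7)] unit_rinv[OF ub(8)] unit_rinv[OF ub(9)]
    unit_rinv[OF uD] unit_rinv[OF uDp]
  have AL: "alg a b c d (rinv a) (rinv b) (rinv c) (rinv d) (rinv (a-1)) (rinv (b-1)) (rinv (c-1)) (rinv (d-1))
    (rinv (b-a)) (rinv (c-a)) (rinv (d-b)) (rinv (d-c)) (rinv (d - c*rinv a*b))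
    (rinv ((d-1) - (c-1)*rinv (a-1)*(b-1))) (rinv ((rinv d - 1) + (rinv b - 1)*rinv (a-1)*a*(rinv c - 1)))"
    by unfold_locales (simp_all add: R)
  note MAIN = alg2.main[OF alg.alg2[OF AL]]
  show ?thesis unfolding A_def \<omega>_def using MAIN ub by simp
qed


end
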